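(* Let $F$ be a $4$-flipclass of $\mathfrak S_n$. Then the support graph $S_F$ and the time-support graph $TS_F$ are isomorphic (as edge-labelled directed graphs).
   Context: $\mathfrak S_n$ is the symmetric group on $[n]$, $T$ its transpositions, $\ell$ the length w.r.t. simple transpositions. The Bruhat graph $B(\mathfrak S_n)$ has an edge $x\xrightarrow{t}y$ iff $yx^{-1}=t\in T$ and $\ell(x)<\ell(y)$. $P_h(u,v)$ is the set of paths $u=x_0\to\cdots\to x_h=v$ of length $h$. Between two fixed vertices there are $0$ or $2$ paths of length $2$; each is the flip of the other. The $i$-th flip operator $f_i$ ($i\in[h-1]$) on $P_h(u,v)$ replaces $x_{i-1}\to x_i\to x_{i+1}$ by its flip; the orbits of $\langle f_1,\dots,f_{h-1}\rangle$ on $P_h(u,v)$ are $h$-flipclasses. For a flipclass $F$, the support graph $S_F$ is the edge-labelled subgraph of $B(\mathfrak S_n)$ formed by all vertices and edges lying on paths of $F$; the time-support graph $TS_F$ has vertices $(a,i)$, $0\le i\le h$, such that some path $(x_0,\dots,x_h)\in F$ has $x_i=a$, and edges $(a,i)\xrightarrow{t}(b,i+1)$ whenever some path of $F$ contains the edge $x_i=a\xrightarrow{t}b=x_{i+1}$. *)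

theory Defs
  imports "HOL-Combinatorics.Combinatorics"
begin

definition perms :: "nat \<Rightarrow> (nat \<Rightarrow> nat) set" where
  "perms n = {x. x permutes {1..n}}"

definition transps :: "nat \<Rightarrow> (nat \<Rightarrow> nat) set" where
  "transps n = {transpose a b | a b. a \<in> {1..n} \<and> b \<in> {1..n} \<and> a \<noteq> b}"

definition simple_transps :: "nat \<Rightarrow> (nat \<Rightarrow> nat) set" where
  "simple_transps n = {transpose i (Suc i) | i. 1 \<le> i \<and> i < n}"

definition len :: "nat \<Rightarrow> (nat \<Rightarrow> nat) \<Rightarrow> nat" where
  "len n x = (LEAST k. \<exists>ws. length ws = k \<and> set ws \<subseteq> simple_transps n \<and> x = foldr (\<circ>) ws id)"

definition label :: "(nat \<Rightarrow> nat) \<Rightarrow> (nat \<Rightarrow> nat) \<Rightarrow> (nat \<Rightarrow> nat)" where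
  "label x y = y \<circ> inv x"

definition bruhat_edge :: "nat \<Rightarrow> (nat \<Rightarrow> nat) \<Rightarrow> (nat \<Rightarrow> nat) \<Rightarrow> bool" where
  "bruhat_edge n x y \<longleftrightarrow> x \<in> perms n \<and> y \<in> perms n \<and> label x y \<in> transps n \<and> len n x < len n y"

definition paths :: "nat \<Rightarrow> nat \<Rightarrow> (nat \<Rightarrow> nat) \<Rightarrow> (nat \<Rightarrow> nat) \<Rightarrow> (nat \<Rightarrow> nat) list set" where
  "paths n h u v = {xs. length xs = Suc h \<and> xs ! 0 = u \<and> xs ! h = v \<and>
       (\<forall>i<h. bruhat_edge n (xs ! i) (xs ! Suc i))}"

definition flip :: "nat \<Rightarrow> nat \<Rightarrow> (nat \<Rightarrow> nat) list \<Rightarrow> (nat \<Rightarrow> nat) list" where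
  "flip n i xs =
     (if \<exists>y. y \<noteq> xs ! i \<and> bruhat_edge n (xs ! (i - 1)) y \<and> bruhat_edge n y (xs ! Suc i)
      then xs[i := (THE y. y \<noteq> xs ! i \<and> bruhat_edge n (xs ! (i - 1)) y \<and> bruhat_edge n y (xs ! Suc i))]
      else xs)"

definition flip_rel :: "nat \<Rightarrow> nat \<Rightarrow> ((nat \<Rightarrow> nat) list \<times> (nat \<Rightarrow> nat) list) set" where
  "flip_rel n h = {(p, flip n i p) | p i. 1 \<le> i \<and> i \<le> h - 1}"

text \<open>h-flipclass: an orbit of the group generated by f_1..f_{h-1} (involutions) on some P_h(u,v).\<close>
definition is_flipclass :: "nat \<Rightarrow> nat \<Rightarrow> (nat \<Rightarrow> nat) list set \<Rightarrow> bool" where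
  "is_flipclass n h F \<longleftrightarrow>
     (\<exists>u v p. p \<in> paths n h u v \<and> F = {q. (p, q) \<in> (flip_rel n h)\<^sup>*})"

definition S_vert :: "(nat \<Rightarrow> nat) list set \<Rightarrow> (nat \<Rightarrow> nat) set" where
  "S_vert F = {a. \<exists>p\<in>F. a \<in> set p}"

definition S_edges :: "(nat \<Rightarrow> nat) list set \<Rightarrow> ((nat \<Rightarrow> nat) \<times> (nat \<Rightarrow> nat) \<times> (nat \<Rightarrow> nat)) set" where
  "S_edges F = {(p ! i, label (p ! i) (p ! Suc i), p ! Suc i) | p i. p \<in> F \<and> Suc i < length p}"

definition TS_vert :: "(nat \<Rightarrow> nat) list set \<Rightarrow> ((nat \<Rightarrow> nat) \<times> nat) set" where
  "TS_vert F = {(a, i). \<exists>p\<in>F. i < length p \<and> p ! i = a}"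

definition TS_edges :: "(nat \<Rightarrow> nat) list set \<Rightarrow>
    (((nat \<Rightarrow> nat) \<times> nat) \<times> (nat \<Rightarrow> nat) \<times> ((nat \<Rightarrow> nat) \<times> nat)) set" where
  "TS_edges F = {((p ! i, i), label (p ! i) (p ! Suc i), (p ! Suc i, Suc i)) | p i. p \<in> F \<and> Suc i < length p}"

definition labelled_iso :: "'a set \<Rightarrow> ('a \<times> 'l \<times> 'a) set \<Rightarrow> 'b set \<Rightarrow> ('b \<times> 'l \<times> 'b) set \<Rightarrow> bool" where
  "labelled_iso V1 E1 V2 E2 \<longleftrightarrow>
     (\<exists>\<phi>. bij_betw \<phi> V1 V2 \<and> (\<forall>a\<in>V1. \<forall>b\<in>V1. \<forall>t. (a, t, b) \<in> E1 \<longleftrightarrow> (\<phi> a, t, \<phi> b) \<in> E2))"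

end

theory Submission
  imports Defs
begin

definition invs :: "nat \<Rightarrow> (nat \<Rightarrow> nat) \<Rightarrow> (nat \<times> nat) set" where
  "invs n \<sigma> = {(a,b). 1 \<le> a \<and> a < b \<and> b \<le> n \<and> \<sigma> b < \<sigma> a}"

definition NI :: "nat \<Rightarrow> (nat \<Rightarrow> nat) \<Rightarrow> nat" where
  "NI n \<sigma> = card (invs n \<sigma>)"

lemma finite_invs: "finite (invs n \<sigma>)"
proof -
  have "invs n \<sigma> \<subseteq> {1..n} \<times> {1..n}" by (auto simp: invs_def)
  thus ?thesis by (rule finite_subset) auto
qed

lemma adj_swap:
  assumes inj: "inj_on \<sigma> {1..n}" and i: "1 \<le> i" "i < n"
  shows "\<sigma> i < \<sigma> (Suc i) \<Longrightarrow> NI n (\<sigma> \<circ> transpose i (Suc i)) = Suc (NI n \<sigma>)"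
    and "\<sigma> (Suc i) < \<sigma> i \<Longrightarrow> Suc (NI n (\<sigma> \<circ> transpose i (Suc i))) = NI n \<sigma>"
proof -
  let ?s = "transpose i (Suc i)"
  let ?D = "{(i, Suc i)}"
  let ?f = "\<lambda>(a,b). (?s a, ?s b)"
  have key: "1 \<le> ?s a \<and> ?s a < ?s b \<and> ?s b \<le> n \<and> (?s a, ?s b) \<noteq> (i, Suc i)"
    if "1 \<le> a" "a < b" "b \<le> n" "(a,b) \<noteq> (i, Suc i)" for a b
    using that i by (auto simp: transpose_def)
  have bij: "bij_betw ?f (invs n (\<sigma> \<circ> ?s) - ?D) (invs n \<sigma> - ?D)"
  proof (rule bij_betw_byWitness[where f' = ?f])
    show "\<forall>a\<in>invs n (\<sigma> \<circ> ?s) - ?D. ?f (?f a) = a" by auto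
    show "\<forall>a\<in>invs n \<sigma> - ?D. ?f (?f a) = a" by auto
    show "?f ` (invs n (\<sigma> \<circ> ?s) - ?D) \<subseteq> invs n \<sigma> - ?D"
    proof
      fix y assume "y \<in> ?f ` (invs n (\<sigma> \<circ> ?s) - ?D)"
      then obtain a b where y: "y = (?s a, ?s b)" and ab: "(a,b) \<in> invs n (\<sigma> \<circ> ?s)" "(a,b) \<noteq> (i, Suc i)" by auto
      from ab have h: "1 \<le> a" "a < b" "b \<le> n" "\<sigma> (?s b) < \<sigma> (?s a)" by (auto simp: invs_def)
      from key[OF h(1-3) ab(2)] h(4) show "y \<in> invs n \<sigma> - ?D" unfolding y invs_def by simp
    qed
    show "?f ` (invs n \<sigma> - ?D) \<subseteq> invs n (\<sigma> \<circ> ?s) - ?D"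
    proof
      fix y assume "y \<in> ?f ` (invs n \<sigma> - ?D)"
      then obtain a b where y: "y = (?s a, ?s b)" and ab: "(a,b) \<in> invs n \<sigma>" "(a,b) \<noteq> (i, Suc i)" by auto
      from ab have h: "1 \<le> a" "a < b" "b \<le> n" "\<sigma> b < \<sigma> a" by (auto simp: invs_def)
      from key[OF h(1-3) ab(2)] h(4) show "y \<in> invs n (\<sigma> \<circ> ?s) - ?D" unfolding y invs_def by simp
    qed
  qed
  hence ceq: "card (invs n (\<sigma> \<circ> ?s) - ?D) = card (invs n \<sigma> - ?D)" by (rule bij_betw_same_card)
  have c1: "card (invs n \<tau>) = card (invs n \<tau> - ?D) + (if (i, Suc i) \<in> invs n \<tau> then 1 else 0)" for \<tau>
  proof (cases "(i, Suc i) \<in> invs n \<tau>")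
    case True
    have "Suc (card (invs n \<tau> - ?D)) = card (invs n \<tau>)"
      using card_Suc_Diff1[OF finite_invs True] .
    then show ?thesis using True by simp
  next
    case False
    then show ?thesis by simp
  qed
  have m1: "(i, Suc i) \<in> invs n (\<sigma> \<circ> ?s) \<longleftrightarrow> \<sigma> i < \<sigma> (Suc i)" using i by (auto simp: invs_def)
  have m2: "(i, Suc i) \<in> invs n \<sigma> \<longleftrightarrow> \<sigma> (Suc i) < \<sigma> i" using i by (auto simp: invs_def)
  have X: "NI n (\<sigma> \<circ> ?s) = card (invs n (\<sigma> \<circ> ?s) - ?D) + (if \<sigma> i < \<sigma> (Suc i) then 1 else 0)"
    unfolding NI_def using c1[of "\<sigma> \<circ> ?s"] m1 by presburger
  have Y: "NI n \<sigma> = card (invs n \<sigma> - ?D) + (if \<sigma> (Suc i) < \<sigma> i then 1 else 0)"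
    unfolding NI_def using c1[of "\<sigma>"] m2 by presburger
  show "\<sigma> i < \<sigma> (Suc i) \<Longrightarrow> NI n (\<sigma> \<circ> ?s) = Suc (NI n \<sigma>)"
    unfolding X Y ceq by simp
  show "\<sigma> (Suc i) < \<sigma> i \<Longrightarrow> Suc (NI n (\<sigma> \<circ> ?s)) = NI n \<sigma>"
    unfolding X Y ceq by simp
qed

lemma adj_le:
  assumes inj: "inj_on \<sigma> {1..n}" and i: "1 \<le> i" "i < n"
  shows "NI n (\<sigma> \<circ> transpose i (Suc i)) \<le> Suc (NI n \<sigma>)"
proof -
  have "\<sigma> i \<noteq> \<sigma> (Suc i)" using inj i by (auto dest: inj_onD)
  then consider "\<sigma> i < \<sigma> (Suc i)" | "\<sigma> (Suc i) < \<sigma> i" by linarith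
  thus ?thesis using adj_swap[OF assms] by cases auto
qed

lemma inj_on_swap_comp:
  assumes "inj_on \<sigma> {1..n}" "p \<in> {1..n}" "q \<in> {1..n}"
  shows "inj_on (\<sigma> \<circ> transpose p q) {1..n}"
proof -
  have "inj_on (transpose p q) {1..n}" by (meson inj_on_def transpose_eq_imp_eq)
  moreover have "transpose p q ` {1..n} = {1..n}" using assms by simp
  ultimately show ?thesis using assms(1) by (simp add: comp_inj_on)
qed

lemma gen_swap:
  "inj_on \<sigma> {1..n} \<Longrightarrow> 1 \<le> p \<Longrightarrow> p < q \<Longrightarrow> q \<le> n \<Longrightarrow> \<sigma> p < \<sigma> q \<Longrightarrow>
    NI n \<sigma> < NI n (\<sigma> \<circ> transpose p q)"
proof (induction "q - p" arbitrary: \<sigma> p)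
  case 0
  then show ?case by simp
next
  case (Suc k)
  show ?case
  proof (cases "q = Suc p")
    case True
    then show ?thesis using adj_swap(1)[of \<sigma> n p] Suc.prems by simp
  next
    case False
    define r where "r = Suc p"
    have rq: "r < q" using False Suc.prems r_def by simp
    let ?s = "transpose p r"
    define \<sigma>1 where "\<sigma>1 = \<sigma> \<circ> ?s"
    define \<sigma>2 where "\<sigma>2 = \<sigma>1 \<circ> transpose r q"
    have pin: "p \<in> {1..n}" "r \<in> {1..n}" "q \<in> {1..n}" using Suc.prems rq r_def by auto
    have inj1: "inj_on \<sigma>1 {1..n}" unfolding \<sigma>1_def
      by (rule inj_on_swap_comp[OF Suc.prems(1) pin(1,2)])
    have inj2: "inj_on \<sigma>2 {1..n}" unfolding \<sigma>2_def
      by (rule inj_on_swap_comp[OF inj1 pin(2,3)])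
    have decomp: "\<sigma> \<circ> transpose p q = \<sigma>2 \<circ> ?s"
      unfolding \<sigma>2_def \<sigma>1_def using transpose_comp_triple[of p q r] rq r_def
      by (simp add: comp_assoc)
    have e1: "\<sigma>1 r = \<sigma> p" "\<sigma>1 q = \<sigma> q" "\<sigma>1 p = \<sigma> r" using rq r_def by (auto simp: \<sigma>1_def)
    have e2: "\<sigma>2 p = \<sigma> r" "\<sigma>2 r = \<sigma> q" using rq r_def e1 by (auto simp: \<sigma>2_def)
    have IH: "NI n \<sigma>1 < NI n \<sigma>2"
      unfolding \<sigma>2_def using Suc.hyps(1)[of r \<sigma>1] Suc.hyps(2) Suc.prems inj1 rq r_def e1 by simp
    have dne: "\<sigma> p \<noteq> \<sigma> r" "\<sigma> r \<noteq> \<sigma> q"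
      using inj_onD[OF Suc.prems(1), of p r] inj_onD[OF Suc.prems(1), of r q] pin r_def rq by auto
    have n1: "r < n" using rq Suc.prems by simp
    have A: "\<sigma> p < \<sigma> r \<Longrightarrow> NI n \<sigma>1 = Suc (NI n \<sigma>)"
      using adj_swap(1)[of \<sigma> n p] Suc.prems n1 r_def by (simp add: \<sigma>1_def)
    have B: "\<sigma> r < \<sigma> p \<Longrightarrow> Suc (NI n \<sigma>1) = NI n \<sigma>"
      using adj_swap(2)[of \<sigma> n p] Suc.prems n1 r_def by (simp add: \<sigma>1_def)
    have C: "\<sigma> r < \<sigma> q \<Longrightarrow> NI n (\<sigma>2 \<circ> ?s) = Suc (NI n \<sigma>2)"
      using adj_swap(1)[of \<sigma>2 n p] inj2 Suc.prems n1 r_def e2 by simp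
    have D: "\<sigma> q < \<sigma> r \<Longrightarrow> Suc (NI n (\<sigma>2 \<circ> ?s)) = NI n \<sigma>2"
      using adj_swap(2)[of \<sigma>2 n p] inj2 Suc.prems n1 r_def e2 by simp
    have o1: "\<sigma> p < \<sigma> r \<or> \<sigma> r < \<sigma> p" using dne by linarith
    have o2: "\<sigma> r < \<sigma> q \<or> \<sigma> q < \<sigma> r" using dne by linarith
    show ?thesis unfolding decomp
    proof -
      { assume h1: "\<sigma> p < \<sigma> r" and h2: "\<sigma> r < \<sigma> q"
        have ?thesis using A[OF h1] C[OF h2] IH unfolding decomp by linarith }
      moreover
      { assume h1: "\<sigma> p < \<sigma> r" and h2: "\<sigma> q < \<sigma> r"
        have ?thesis using A[OF h1] D[OF h2] IH unfolding decomp by linarith }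
      moreover
      { assume h1: "\<sigma> r < \<sigma> p" and h2: "\<sigma> r < \<sigma> q"
        have ?thesis using B[OF h1] C[OF h2] IH unfolding decomp by linarith }
      moreover
      { assume h1: "\<sigma> r < \<sigma> p" and h2: "\<sigma> q < \<sigma> r"
        have False using h1 h2 Suc.prems(5) by linarith }
      ultimately show "NI n \<sigma> < NI n (\<sigma>2 \<circ> ?s)" using o1 o2 unfolding decomp by blast
    qed
  qed
qed

lemma perms_iff: "x \<in> perms n \<longleftrightarrow> x permutes {1..n}" by (simp add: perms_def)

lemma simple_permutes: "s \<in> simple_transps n \<Longrightarrow> s permutes {1..n}"
  by (auto simp: simple_transps_def intro!: permutes_swap_id)

lemma foldr_cons_comp: "foldr (\<circ>) (s # ws) id = s \<circ> foldr (\<circ>) ws id"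
  by (simp add: fun_eq_iff)

lemma foldr_permutes: "set ws \<subseteq> simple_transps n \<Longrightarrow> foldr (\<circ>) ws id permutes {1..n}"
proof (induction ws)
  case Nil
  then show ?case by (simp add: permutes_def)
next
  case (Cons s ws)
  have "s permutes {1..n}" using Cons.prems simple_permutes by auto
  moreover have "set ws \<subseteq> simple_transps n" using Cons.prems by simp
  hence "foldr (\<circ>) ws id permutes {1..n}" by (rule Cons.IH)
  ultimately have "s \<circ> foldr (\<circ>) ws id permutes {1..n}" by (rule permutes_compose[rotated])
  then show ?case by (simp only: foldr_cons_comp)
qed

lemma permutes_inj_on_inv: "x permutes S \<Longrightarrow> inj_on (inv x) T"
  by (meson inj_on_subset permutes_inj permutes_inv subset_UNIV)

lemma NI_id: "NI n id = 0"
proof -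
  have "invs n id = {}" by (auto simp: invs_def)
  thus ?thesis by (simp add: NI_def)
qed

lemma inv_comp_transpose: "x permutes S \<Longrightarrow> inv (transpose a b \<circ> x) = inv x \<circ> transpose a b"
proof -
  assume "x permutes S"
  hence "bij x" by (rule permutes_bij)
  moreover have "bij (transpose a b)" by (rule bij_transpose)
  ultimately have "inv (transpose a b \<circ> x) = inv x \<circ> inv (transpose a b)" by (rule o_inv_distrib[rotated])
  thus ?thesis by simp
qed

lemma word_bound: "set ws \<subseteq> simple_transps n \<Longrightarrow> NI n (inv (foldr (\<circ>) ws id)) \<le> length ws"
proof (induction ws)
  case Nil
  have "inv (foldr (\<circ>) [] id) = (id :: nat \<Rightarrow> nat)" by simp
  then show ?case by (simp only: NI_id)
next
  case (Cons s ws)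
  let ?y = "foldr (\<circ>) ws id"
  have py: "?y permutes {1..n}" using Cons.prems foldr_permutes by auto
  from Cons.prems obtain i where s: "s = transpose i (Suc i)" "1 \<le> i" "i < n"
    by (auto simp: simple_transps_def)
  have "inv (s \<circ> ?y) = inv ?y \<circ> s" using inv_comp_transpose[OF py] s by simp
  moreover have "NI n (inv ?y \<circ> transpose i (Suc i)) \<le> Suc (NI n (inv ?y))"
    by (rule adj_le[OF permutes_inj_on_inv[OF py] s(2,3)])
  ultimately have "NI n (inv (s \<circ> ?y)) \<le> Suc (NI n (inv ?y))" by (simp add: s(1))
  moreover have "set ws \<subseteq> simple_transps n" using Cons.prems by simp
  hence "NI n (inv ?y) \<le> length ws" by (rule Cons.IH)
  ultimately show ?case unfolding foldr_cons_comp length_Cons by linarith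
qed

lemma chain_mono:
  assumes "\<And>i. 1 \<le> i \<Longrightarrow> i < n \<Longrightarrow> (\<sigma>::nat\<Rightarrow>nat) i < \<sigma> (Suc i)"
  shows "1 \<le> a \<Longrightarrow> a < b \<Longrightarrow> b \<le> n \<Longrightarrow> \<sigma> a < \<sigma> b"
proof (induction b)
  case 0
  then show ?case by simp
next
  case (Suc b)
  show ?case
  proof (cases "a = b")
    case True
    then show ?thesis using assms Suc.prems by simp
  next
    case False
    then have "\<sigma> a < \<sigma> b" using Suc by simp
    also have "\<sigma> b < \<sigma> (Suc b)" using assms Suc.prems False by simp
    finally show ?thesis .
  qed
qed

lemma mono_perm_id:
  assumes p: "(\<sigma>::nat\<Rightarrow>nat) permutes {1..n}" and m: "\<And>a b. 1 \<le> a \<Longrightarrow> a < b \<Longrightarrow> b \<le> n \<Longrightarrow> \<sigma> a < \<sigma> b"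
  shows "\<sigma> = id"
proof -
  have "\<sigma> i = i" if "i \<in> {1..n}" for i
    using that
  proof (induction i rule: less_induct)
    case (less i)
    have si: "\<sigma> i \<in> {1..n}" using permutes_in_image[OF p] less.prems by simp
    have ge: "i \<le> \<sigma> i"
    proof (rule ccontr)
      assume "\<not> i \<le> \<sigma> i"
      hence lt: "\<sigma> i < i" by simp
      hence "\<sigma> (\<sigma> i) = \<sigma> i" using less.IH[of "\<sigma> i"] si by simp
      hence "\<sigma> i = i" using permutes_inj[OF p] by (meson injD)
      thus False using lt by simp
    qed
    show ?case
    proof (rule ccontr)
      assume "\<sigma> i \<noteq> i"
      hence gt: "i < \<sigma> i" using ge by simp
      obtain k where k: "k \<in> {1..n}" "\<sigma> k = i"
        using permutes_surj[OF p] less.prems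
        by (metis permutes_inverses(1)[OF p] permutes_inv[OF p] permutes_in_image)
      have "k \<noteq> i" using k gt by auto
      show False
      proof (cases "k < i")
        case True
        then show ?thesis using less.IH[of k] k by simp
      next
        case False
        hence "i < k" using \<open>k \<noteq> i\<close> by simp
        hence "\<sigma> i < \<sigma> k" using m less.prems k by auto
        thus ?thesis using gt k by simp
      qed
    qed
  qed
  moreover have "\<sigma> i = i" if "i \<notin> {1..n}" for i using p that by (simp add: permutes_not_in)
  ultimately show ?thesis by (auto simp: fun_eq_iff)
qed

lemma word_exists:
  "x permutes {1..n} \<Longrightarrow> NI n (inv x) = k \<Longrightarrow>
     \<exists>ws. length ws = k \<and> set ws \<subseteq> simple_transps n \<and> x = foldr (\<circ>) ws id"
proof (induction k arbitrary: x)
  case 0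
  let ?\<sigma> = "inv x"
  have ps: "?\<sigma> permutes {1..n}" using permutes_inv[OF "0.prems"(1)] .
  have e: "invs n ?\<sigma> = {}" using "0.prems"(2) finite_invs unfolding NI_def by auto
  have m: "?\<sigma> a < ?\<sigma> b" if "1 \<le> a" "a < b" "b \<le> n" for a b
  proof -
    have "\<not> ?\<sigma> b < ?\<sigma> a" using e that by (auto simp: invs_def)
    moreover have "?\<sigma> a \<noteq> ?\<sigma> b" using permutes_inj[OF ps] that by (auto dest: injD)
    ultimately show ?thesis by simp
  qed
  have "?\<sigma> = id" by (rule mono_perm_id[OF ps m])
  hence "x = id" using permutes_inv_inv[OF "0.prems"(1)] by (metis inv_id)
  then show ?case by (intro exI[of _ "[]"]) simp
next
  case (Suc k)
  let ?\<sigma> = "inv x"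
  have ps: "?\<sigma> permutes {1..n}" using permutes_inv[OF Suc.prems(1)] .
  have injs: "inj_on ?\<sigma> {1..n}" by (rule permutes_inj_on_inv[OF Suc.prems(1)])
  obtain i where i: "1 \<le> i" "i < n" "?\<sigma> (Suc i) < ?\<sigma> i"
  proof (rule ccontr)
    assume "\<not> thesis"
    hence h: "\<And>i. 1 \<le> i \<Longrightarrow> i < n \<Longrightarrow> \<not> ?\<sigma> (Suc i) < ?\<sigma> i" using that by blast
    have h2: "?\<sigma> i < ?\<sigma> (Suc i)" if "1 \<le> i" "i < n" for i
    proof -
      have "?\<sigma> i \<noteq> ?\<sigma> (Suc i)" using inj_onD[OF injs, of i "Suc i"] that by auto
      thus ?thesis using h[OF that] by simp
    qed
    have "invs n ?\<sigma> = {}"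
      using chain_mono[of n ?\<sigma>, OF h2] by (auto simp: invs_def) (meson less_asym)
    thus False using Suc.prems(2) unfolding NI_def by simp
  qed
  let ?s = "transpose i (Suc i)"
  define x' where "x' = ?s \<circ> x"
  have sp: "?s permutes {1..n}" using i by (intro permutes_swap_id) auto
  have px': "x' permutes {1..n}" unfolding x'_def by (rule permutes_compose[OF Suc.prems(1) sp])
  have "inv x' = ?\<sigma> \<circ> ?s" unfolding x'_def by (rule inv_comp_transpose[OF Suc.prems(1)])
  hence "Suc (NI n (inv x')) = NI n ?\<sigma>" using adj_swap(2)[OF injs i(1,2) i(3)] by simp
  hence "NI n (inv x') = k" using Suc.prems(2) by simp
  then obtain ws where ws: "length ws = k" "set ws \<subseteq> simple_transps n" "x' = foldr (\<circ>) ws id"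
    using Suc.IH[OF px'] by blast
  have "x = ?s \<circ> x'" unfolding x'_def by (simp add: comp_assoc[symmetric])
  moreover have "?s \<in> simple_transps n" using i by (auto simp: simple_transps_def)
  ultimately have "x = foldr (\<circ>) (?s # ws) id" using ws(3) by (simp only: foldr_cons_comp)
  note xe = this
  show ?case
  proof (rule exI[of _ "?s # ws"], intro conjI)
    show "length (?s # ws) = Suc k" using ws(1) by simp
    show "set (?s # ws) \<subseteq> simple_transps n" using ws(2) \<open>?s \<in> simple_transps n\<close> by simp
    show "x = foldr (\<circ>) (?s # ws) id" by (rule xe)
  qed
qed

lemma len_eq: "x permutes {1..n} \<Longrightarrow> len n x = NI n (inv x)"
  unfolding len_def
proof (rule Least_equality)
  assume "x permutes {1..n}"
  thus "\<exists>ws. length ws = NI n (inv x) \<and> set ws \<subseteq> simple_transps n \<and> x = foldr (\<circ>) ws id"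
    using word_exists by blast
next
  fix k assume "\<exists>ws. length ws = k \<and> set ws \<subseteq> simple_transps n \<and> x = foldr (\<circ>) ws id"
  then obtain ws where "length ws = k" "set ws \<subseteq> simple_transps n" "x = foldr (\<circ>) ws id" by blast
  thus "NI n (inv x) \<le> k" using word_bound by blast
qed

lemma edge_ascent:
  assumes x: "x permutes {1..n}" and ab: "\<alpha> < \<beta>" "\<alpha> \<in> {1..n}" "\<beta> \<in> {1..n}"
    and l: "len n x < len n (transpose \<alpha> \<beta> \<circ> x)"
  shows "inv x \<alpha> < inv x \<beta>"
proof (rule ccontr)
  assume "\<not> inv x \<alpha> < inv x \<beta>"
  moreover have "inv x \<alpha> \<noteq> inv x \<beta>" using permutes_inj_on_inv[OF x, of UNIV] ab by (auto dest: injD)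
  ultimately have lt: "inv x \<beta> < inv x \<alpha>" by simp
  let ?t = "transpose \<alpha> \<beta>"
  have tp: "?t permutes {1..n}" using ab by (intro permutes_swap_id) auto
  have y: "?t \<circ> x permutes {1..n}" by (rule permutes_compose[OF x tp])
  let ?\<sigma> = "inv (?t \<circ> x)"
  have s: "?\<sigma> = inv x \<circ> ?t" by (rule inv_comp_transpose[OF x])
  have "NI n ?\<sigma> < NI n (?\<sigma> \<circ> ?t)"
    by (rule gen_swap[OF permutes_inj_on_inv[OF y]]) (use ab lt s in auto)
  moreover have "?\<sigma> \<circ> ?t = inv x" unfolding s by (simp add: comp_assoc)
  ultimately have "len n (?t \<circ> x) < len n x" using len_eq[OF x] len_eq[OF y] by simp
  thus False using l by simp
qed

lemma transpose_eq_cases: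
  assumes "a \<noteq> b" "transpose a b = transpose c d"
  shows "(a = c \<and> b = d) \<or> (a = d \<and> b = c)"
proof -
  have "transpose c d a = b" using assms(2) by (metis transpose_apply_first)
  thus ?thesis using assms(1) by (auto simp: transpose_eq_iff)
qed

lemma moved_letters:
  assumes ab: "a \<noteq> b" and cd: "c \<noteq> d" and ne: "transpose a b \<noteq> transpose c d"
    and k: "k \<in> {a,b,c,d}"
  shows "(transpose a b \<circ> transpose c d) k \<noteq> k"
proof
  assume h: "(transpose a b \<circ> transpose c d) k = k"
  have "(a = c \<and> b = d) \<or> (a = d \<and> b = c)"
    using h k ab cd by (auto simp: transpose_def split: if_splits)
  hence "transpose a b = transpose c d" by (auto simp: transpose_commute)
  thus False using ne by simp
qed

lemma fact_disj:
  assumes dist: "distinct [a,b,c,d]"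
    and gd: "\<gamma> \<noteq> \<delta>" "\<epsilon> \<noteq> \<zeta>" and ne: "transpose \<epsilon> \<zeta> \<noteq> transpose \<gamma> \<delta>"
    and eq: "transpose \<epsilon> \<zeta> \<circ> transpose \<gamma> \<delta> = transpose c d \<circ> transpose a b"
  shows "(transpose \<gamma> \<delta> = transpose a b \<and> transpose \<epsilon> \<zeta> = transpose c d) \<or>
         (transpose \<gamma> \<delta> = transpose c d \<and> transpose \<epsilon> \<zeta> = transpose a b)"
proof -
  let ?\<pi> = "transpose c d \<circ> transpose a b"
  have mg: "?\<pi> \<gamma> \<noteq> \<gamma>" "?\<pi> \<delta> \<noteq> \<delta>"
    using moved_letters[OF gd(2) gd(1) ne] eq by auto
  have inn: "\<gamma> \<in> {a,b,c,d}" "\<delta> \<in> {a,b,c,d}"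
    using mg by (auto simp: transpose_def split: if_splits)
  have s: "transpose \<epsilon> \<zeta> = ?\<pi> \<circ> transpose \<gamma> \<delta>"
    using eq by (metis comp_assoc comp_id transpose_comp_involutory)
  have inv: "transpose \<epsilon> \<zeta> (transpose \<epsilon> \<zeta> k) = k" for k by simp
  have "{\<gamma>,\<delta>} = {a,b} \<or> {\<gamma>,\<delta>} = {c,d}"
  proof (rule ccontr)
    assume nn: "\<not> ({\<gamma>,\<delta>} = {a,b} \<or> {\<gamma>,\<delta>} = {c,d})"
    have "transpose \<epsilon> \<zeta> (transpose \<epsilon> \<zeta> \<gamma>) \<noteq> \<gamma>"
      unfolding s using inn nn dist gd by (auto simp: transpose_def)
    thus False using inv by simp
  qed
  hence "transpose \<gamma> \<delta> = transpose a b \<or> transpose \<gamma> \<delta> = transpose c d"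
    using gd by (auto simp: doubleton_eq_iff transpose_commute)
  thus ?thesis
  proof
    assume t: "transpose \<gamma> \<delta> = transpose a b"
    have "transpose \<epsilon> \<zeta> = transpose c d" unfolding s t by (simp add: comp_assoc)
    thus ?thesis using t by simp
  next
    assume t: "transpose \<gamma> \<delta> = transpose c d"
    have "transpose \<epsilon> \<zeta> = transpose a b" unfolding s t using dist
      by (auto simp: fun_eq_iff transpose_def)
    thus ?thesis using t by simp
  qed
qed

lemma fact_share:
  assumes dist: "distinct [a,b,c]"
    and gd: "\<gamma> \<noteq> \<delta>" "\<epsilon> \<noteq> \<zeta>" and ne: "transpose \<epsilon> \<zeta> \<noteq> transpose \<gamma> \<delta>"
    and eq: "transpose \<epsilon> \<zeta> \<circ> transpose \<gamma> \<delta> = transpose b c \<circ> transpose a b"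
  shows "(transpose \<gamma> \<delta> = transpose a b \<and> transpose \<epsilon> \<zeta> = transpose b c) \<or>
         (transpose \<gamma> \<delta> = transpose b c \<and> transpose \<epsilon> \<zeta> = transpose a c) \<or>
         (transpose \<gamma> \<delta> = transpose a c \<and> transpose \<epsilon> \<zeta> = transpose a b)"
proof -
  let ?\<pi> = "transpose b c \<circ> transpose a b"
  have mg: "?\<pi> \<gamma> \<noteq> \<gamma>" "?\<pi> \<delta> \<noteq> \<delta>"
    using moved_letters[OF gd(2) gd(1) ne] eq by auto
  have inn: "\<gamma> \<in> {a,b,c}" "\<delta> \<in> {a,b,c}"
    using mg by (auto simp: transpose_def split: if_splits)
  have s: "transpose \<epsilon> \<zeta> = ?\<pi> \<circ> transpose \<gamma> \<delta>"
    using eq by (metis comp_assoc comp_id transpose_comp_involutory)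
  have "transpose \<gamma> \<delta> = transpose a b \<or> transpose \<gamma> \<delta> = transpose b c \<or> transpose \<gamma> \<delta> = transpose a c"
    using inn gd by (auto simp: transpose_commute)
  thus ?thesis
  proof (elim disjE)
    assume t: "transpose \<gamma> \<delta> = transpose a b"
    have "transpose \<epsilon> \<zeta> = transpose b c" unfolding s t by (simp add: comp_assoc)
    thus ?thesis using t by simp
  next
    assume t: "transpose \<gamma> \<delta> = transpose b c"
    have "transpose \<epsilon> \<zeta> = transpose a c" unfolding s t using dist
      by (auto simp: fun_eq_iff transpose_def)
    thus ?thesis using t by simp
  next
    assume t: "transpose \<gamma> \<delta> = transpose a c"
    have "transpose \<epsilon> \<zeta> = transpose a b" unfolding s t using dist
      by (auto simp: fun_eq_iff transpose_def)
    thus ?thesis using t by simp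
  qed
qed

definition Eset :: "(nat \<Rightarrow> nat) \<Rightarrow> (nat \<times> nat) set" where
  "Eset t = {(a,b). a \<noteq> b \<and> t = transpose a b}"

lemma Eset_transpose: "a \<noteq> b \<Longrightarrow> Eset (transpose a b) = {(a,b),(b,a)}"
proof -
  assume ab: "a \<noteq> b"
  show ?thesis
  proof (intro equalityI subsetI)
    fix p assume "p \<in> Eset (transpose a b)"
    then obtain x y where p: "p = (x,y)" "x \<noteq> y" "transpose a b = transpose x y" by (auto simp: Eset_def)
    from transpose_eq_cases[OF ab p(3)] show "p \<in> {(a,b),(b,a)}" using p by auto
  next
    fix p assume "p \<in> {(a,b),(b,a)}"
    thus "p \<in> Eset (transpose a b)" using ab by (auto simp: Eset_def transpose_commute)
  qed
qed

lemma label_comp: "x permutes S \<Longrightarrow> label x (t \<circ> x) = t"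
  unfolding label_def by (simp add: comp_assoc permutes_inv_o(1))

lemma label_apply: "x permutes S \<Longrightarrow> label x y \<circ> x = y"
  unfolding label_def by (simp add: comp_assoc permutes_inv_o(2))

lemma edge_basic:
  assumes "bruhat_edge n x y"
  shows "x permutes {1..n}" "y permutes {1..n}" "len n x < len n y" "y = label x y \<circ> x"
    "\<exists>\<alpha> \<beta>. \<alpha> \<noteq> \<beta> \<and> \<alpha> \<in> {1..n} \<and> \<beta> \<in> {1..n} \<and> label x y = transpose \<alpha> \<beta>"
proof -
  show xp: "x permutes {1..n}" and "y permutes {1..n}" "len n x < len n y"
    using assms by (auto simp: bruhat_edge_def perms_def)
  show "y = label x y \<circ> x" using label_apply[OF xp] by simp
  show "\<exists>\<alpha> \<beta>. \<alpha> \<noteq> \<beta> \<and> \<alpha> \<in> {1..n} \<and> \<beta> \<in> {1..n} \<and> label x y = transpose \<alpha> \<beta>"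
    using assms by (auto simp: bruhat_edge_def transps_def)
qed

lemma step_info:
  assumes e: "bruhat_edge n x y" and l: "label x y = transpose \<alpha> \<beta>" and ab: "\<alpha> \<noteq> \<beta>"
  shows "y = transpose \<alpha> \<beta> \<circ> x" "\<alpha> < \<beta> \<longleftrightarrow> inv x \<alpha> < inv x \<beta>"
    "inv y = inv x \<circ> transpose \<alpha> \<beta>"
proof -
  note eb = edge_basic[OF e]
  show y: "y = transpose \<alpha> \<beta> \<circ> x" using eb(4) l by simp
  show "inv y = inv x \<circ> transpose \<alpha> \<beta>" unfolding y by (rule inv_comp_transpose[OF eb(1)])
  obtain a b where a: "a \<noteq> b" "a \<in> {1..n}" "b \<in> {1..n}" "label x y = transpose a b" using eb(5) by blast
  have "\<alpha> \<in> {1..n} \<and> \<beta> \<in> {1..n}" using transpose_eq_cases[OF ab, of a b] a l by auto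
  hence ain: "\<alpha> \<in> {1..n}" "\<beta> \<in> {1..n}" by auto
  have ll: "len n x < len n (transpose \<alpha> \<beta> \<circ> x)" using eb(3) y by simp
  show "\<alpha> < \<beta> \<longleftrightarrow> inv x \<alpha> < inv x \<beta>"
  proof (cases "\<alpha> < \<beta>")
    case True
    then show ?thesis using edge_ascent[OF eb(1) True ain ll] by simp
  next
    case False
    hence ba: "\<beta> < \<alpha>" using ab by simp
    have ll': "len n x < len n (transpose \<beta> \<alpha> \<circ> x)" using ll by (simp add: transpose_commute)
    show ?thesis using edge_ascent[OF eb(1) ba ain(2,1) ll'] False by simp
  qed
qed

lemma edge_label_ex:
  assumes "bruhat_edge n x y"
  obtains \<alpha> \<beta> where "\<alpha> \<noteq> \<beta>" "label x y = transpose \<alpha> \<beta>"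
  using edge_basic(5)[OF assms] by blast

lemma share_norm:
  assumes ab: "a \<noteq> b" and cd: "c \<noteq> d" and ne: "transpose a b \<noteq> transpose c d"
    and sh: "{a,b} \<inter> {c,d} \<noteq> {}"
  shows "\<exists>a' b' c'. distinct [a',b',c'] \<and> transpose a b = transpose a' b' \<and> transpose c d = transpose b' c'"
proof -
  from sh consider "c = a" | "c = b" | "d = a" | "d = b" by auto
  thus ?thesis
  proof cases
    case 1
    hence "d \<noteq> b" using ne by auto
    thus ?thesis using 1 ab cd by (intro exI[of _ b] exI[of _ a] exI[of _ d]) (auto simp: transpose_commute)
  next
    case 2
    hence "d \<noteq> a" using ne by (auto simp: transpose_commute)
    thus ?thesis using 2 ab cd by (intro exI[of _ a] exI[of _ b] exI[of _ d]) auto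
  next
    case 3
    hence "c \<noteq> b" using ne by (auto simp: transpose_commute)
    thus ?thesis using 3 ab cd by (intro exI[of _ b] exI[of _ a] exI[of _ c]) (auto simp: transpose_commute)
  next
    case 4
    hence "c \<noteq> a" using ne by (auto simp: transpose_commute)
    thus ?thesis using 4 ab cd by (intro exI[of _ a] exI[of _ b] exI[of _ c]) (auto simp: transpose_commute)
  qed
qed

lemma cancel_right:
  assumes "x permutes S" "f \<circ> x = g \<circ> x" shows "f = g"
proof -
  have "f \<circ> x \<circ> inv x = g \<circ> x \<circ> inv x" using assms(2) by simp
  thus ?thesis by (simp add: comp_assoc permutes_inv_o(1)[OF assms(1)])
qed

lemma two_step:
  assumes e1: "bruhat_edge n x y" and e2: "bruhat_edge n y z"
  obtains a b c d where "a \<noteq> b" "c \<noteq> d" "label x y = transpose a b" "label y z = transpose c d"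
    "transpose c d \<noteq> transpose a b" "transpose c d \<circ> transpose a b = z \<circ> inv x"
    "y = transpose a b \<circ> x" "z = transpose c d \<circ> y"
proof -
  obtain a b where ab: "a \<noteq> b" "label x y = transpose a b" using edge_label_ex[OF e1] by blast
  obtain c d where cd: "c \<noteq> d" "label y z = transpose c d" using edge_label_ex[OF e2] by blast
  have y: "y = transpose a b \<circ> x" using step_info(1)[OF e1 ab(2) ab(1)] .
  have z: "z = transpose c d \<circ> y" using step_info(1)[OF e2 cd(2) cd(1)] .
  have xp: "x permutes {1..n}" using edge_basic(1)[OF e1] .
  have zz: "z \<circ> inv x = transpose c d \<circ> transpose a b"
    unfolding z y by (simp add: comp_assoc permutes_inv_o(1)[OF xp])
  have ne: "transpose c d \<noteq> transpose a b"
  proof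
    assume "transpose c d = transpose a b"
    hence "z = x" unfolding z y by (simp add: comp_assoc[symmetric])
    thus False using edge_basic(3)[OF e1] edge_basic(3)[OF e2] by simp
  qed
  show ?thesis using that[OF ab(1) cd(1) ab(2) cd(2) ne zz[symmetric] y z] .
qed

lemma valid_step2:
  assumes e1: "bruhat_edge n x y" and e2: "bruhat_edge n y z"
    and l1: "label x y = transpose p q" and l2: "label y z = transpose r s" and pq: "p \<noteq> q" and rs: "r \<noteq> s"
  shows "(p < q \<longleftrightarrow> inv x p < inv x q) \<and> (r < s \<longleftrightarrow> inv x (transpose p q r) < inv x (transpose p q s))"
proof -
  have A: "p < q \<longleftrightarrow> inv x p < inv x q" by (rule step_info(2)[OF e1 l1 pq])
  have iy: "inv y = inv x \<circ> transpose p q" by (rule step_info(3)[OF e1 l1 pq])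
  have B: "r < s \<longleftrightarrow> inv y r < inv y s" by (rule step_info(2)[OF e2 l2 rs])
  show ?thesis using A B unfolding iy by simp
qed

lemma mid_unique:
  assumes e: "bruhat_edge n x y1" "bruhat_edge n y1 z" "bruhat_edge n x y2" "bruhat_edge n y2 z"
     "bruhat_edge n x y3" "bruhat_edge n y3 z"
    and d: "y1 \<noteq> y2" "y1 \<noteq> y3" "y2 \<noteq> y3"
  shows False
proof -
  obtain a1 b1 c1 d1 where h1: "a1 \<noteq> b1" "c1 \<noteq> d1" "label x y1 = transpose a1 b1" "label y1 z = transpose c1 d1"
    "transpose c1 d1 \<noteq> transpose a1 b1" "transpose c1 d1 \<circ> transpose a1 b1 = z \<circ> inv x"
    "y1 = transpose a1 b1 \<circ> x" "z = transpose c1 d1 \<circ> y1"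
    using two_step[OF e(1,2)] by blast
  obtain a2 b2 c2 d2 where h2: "a2 \<noteq> b2" "c2 \<noteq> d2" "label x y2 = transpose a2 b2" "label y2 z = transpose c2 d2"
    "transpose c2 d2 \<noteq> transpose a2 b2" "transpose c2 d2 \<circ> transpose a2 b2 = z \<circ> inv x"
    "y2 = transpose a2 b2 \<circ> x" "z = transpose c2 d2 \<circ> y2"
    using two_step[OF e(3,4)] by blast
  obtain a3 b3 c3 d3 where h3: "a3 \<noteq> b3" "c3 \<noteq> d3" "label x y3 = transpose a3 b3" "label y3 z = transpose c3 d3"
    "transpose c3 d3 \<noteq> transpose a3 b3" "transpose c3 d3 \<circ> transpose a3 b3 = z \<circ> inv x"
    "y3 = transpose a3 b3 \<circ> x" "z = transpose c3 d3 \<circ> y3"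
    using two_step[OF e(5,6)] by blast
  have t12: "transpose a1 b1 \<noteq> transpose a2 b2" using d(1) h1(7) h2(7) by auto
  have t13: "transpose a1 b1 \<noteq> transpose a3 b3" using d(2) h1(7) h3(7) by auto
  have t23: "transpose a2 b2 \<noteq> transpose a3 b3" using d(3) h2(7) h3(7) by auto
  have xp: "x permutes {1..n}" using edge_basic(1)[OF e(1)] .
  have injP: "inj (inv x)" using permutes_inj_on_inv[OF xp, of UNIV] .
  have eq2: "transpose c2 d2 \<circ> transpose a2 b2 = transpose c1 d1 \<circ> transpose a1 b1" using h1(6) h2(6) by simp
  have eq3: "transpose c3 d3 \<circ> transpose a3 b3 = transpose c1 d1 \<circ> transpose a1 b1" using h1(6) h3(6) by simp
  show False
  proof (cases "{a1,b1} \<inter> {c1,d1} = {}")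
    case True
    have dist: "distinct [a1,b1,c1,d1]" using True h1(1,2) by auto
    have o2: "transpose a2 b2 = transpose c1 d1" using fact_disj[OF dist h2(1) h2(2) h2(5) eq2] t12 by auto
    have o3: "transpose a3 b3 = transpose c1 d1" using fact_disj[OF dist h3(1) h3(2) h3(5) eq3] t13 by auto
    show False using o2 o3 t23 by simp
  next
    case False
    obtain a b c where abc: "distinct [a,b,c]" "transpose a1 b1 = transpose a b" "transpose c1 d1 = transpose b c"
      using share_norm[OF h1(1) h1(2) h1(5)[symmetric] False] by blast
    have eqk: "transpose c1 d1 \<circ> transpose a1 b1 = transpose b c \<circ> transpose a b" using abc by simp
    let ?P = "inv x"
    have tb: "transpose a b b = a" "transpose a b c = c" "transpose b c a = a" "transpose b c c = b"
      "transpose a c b = b" "transpose a c c = a" "transpose a b a = b" "transpose b c b = c" "transpose a c a = c"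
      using abc(1) by auto
    define V1 where "V1 = ((a < b \<longleftrightarrow> ?P a < ?P b) \<and> (b < c \<longleftrightarrow> ?P a < ?P c))"
    define V2 where "V2 = ((b < c \<longleftrightarrow> ?P b < ?P c) \<and> (a < c \<longleftrightarrow> ?P a < ?P b))"
    define V3 where "V3 = ((a < c \<longleftrightarrow> ?P a < ?P c) \<and> (a < b \<longleftrightarrow> ?P c < ?P b))"
    have opt: "(transpose ak bk = transpose a b \<and> V1) \<or> (transpose ak bk = transpose b c \<and> V2) \<or>
               (transpose ak bk = transpose a c \<and> V3)"
      if ek: "bruhat_edge n x yk" "bruhat_edge n yk z" and lk: "label x yk = transpose ak bk" "label yk z = transpose ck dk"
        and nk: "ak \<noteq> bk" "ck \<noteq> dk" "transpose ck dk \<noteq> transpose ak bk"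
        and eqk': "transpose ck dk \<circ> transpose ak bk = transpose b c \<circ> transpose a b"
      for yk ak bk ck dk
    proof -
      have ab: "a \<noteq> b" "b \<noteq> c" "a \<noteq> c" using abc(1) by auto
      from fact_share[OF abc(1) nk eqk'] show ?thesis
      proof (elim disjE conjE)
        assume t: "transpose ak bk = transpose a b" and s: "transpose ck dk = transpose b c"
        have "V1" using valid_step2[OF ek lk(1)[unfolded t] lk(2)[unfolded s] ab(1) ab(2)] unfolding V1_def tb .
        thus ?thesis using t by simp
      next
        assume t: "transpose ak bk = transpose b c" and s: "transpose ck dk = transpose a c"
        have "V2" using valid_step2[OF ek lk(1)[unfolded t] lk(2)[unfolded s] ab(2) ab(3)] unfolding V2_def tb .
        thus ?thesis using t by simp
      next
        assume t: "transpose ak bk = transpose a c" and s: "transpose ck dk = transpose a b"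
        have "V3" using valid_step2[OF ek lk(1)[unfolded t] lk(2)[unfolded s] ab(3) ab(1)] unfolding V3_def tb .
        thus ?thesis using t by simp
      qed
    qed
    have eq2k: "transpose c2 d2 \<circ> transpose a2 b2 = transpose b c \<circ> transpose a b" using eq2 eqk by simp
    have eq3k: "transpose c3 d3 \<circ> transpose a3 b3 = transpose b c \<circ> transpose a b" using eq3 eqk by simp
    have o1: "(transpose a1 b1 = transpose a b \<and> V1) \<or> (transpose a1 b1 = transpose b c \<and> V2) \<or>
               (transpose a1 b1 = transpose a c \<and> V3)" by (rule opt[OF e(1,2) h1(3,4) h1(1,2,5) eqk])
    have o2: "(transpose a2 b2 = transpose a b \<and> V1) \<or> (transpose a2 b2 = transpose b c \<and> V2) \<or>
               (transpose a2 b2 = transpose a c \<and> V3)" by (rule opt[OF e(3,4) h2(3,4) h2(1,2,5) eq2k])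
    have o3: "(transpose a3 b3 = transpose a b \<and> V1) \<or> (transpose a3 b3 = transpose b c \<and> V2) \<or>
               (transpose a3 b3 = transpose a c \<and> V3)" by (rule opt[OF e(5,6) h3(3,4) h3(1,2,5) eq3k])
    have V: "V1 \<and> V2 \<and> V3" using o1 o2 o3 t12 t13 t23 by auto
    have dP: "?P a \<noteq> ?P b" "?P b \<noteq> ?P c" "?P a \<noteq> ?P c" using injP abc(1) by (auto dest: injD)
    show False using V dP unfolding V1_def V2_def V3_def by linarith
  qed
qed

lemma three_path:
  assumes e1: "bruhat_edge n x y1" and e2: "bruhat_edge n y1 y2" and e3: "bruhat_edge n y2 y3"
    and y3: "y3 = transpose c d \<circ> x" and cd: "c \<noteq> d"
  shows "\<exists>z. z \<noteq> c \<and> z \<noteq> d \<and> (c < z \<and> z < d \<or> d < z \<and> z < c) \<and>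
     (inv x c < inv x z \<and> inv x z < inv x d \<or> inv x d < inv x z \<and> inv x z < inv x c) \<and>
     Eset (label x y1) \<subseteq> {c,d,z} \<times> {c,d,z} \<and> Eset (label y1 y2) \<subseteq> {c,d,z} \<times> {c,d,z} \<and>
     Eset (label y2 y3) \<subseteq> {c,d,z} \<times> {c,d,z} \<and>
     (c, z) \<in> (Eset (label x y1) \<union> Eset (label y1 y2))\<^sup>*"
proof -
  obtain a1 b1 a2 b2 where h1: "a1 \<noteq> b1" "a2 \<noteq> b2" "label x y1 = transpose a1 b1" "label y1 y2 = transpose a2 b2"
    "transpose a2 b2 \<noteq> transpose a1 b1" "transpose a2 b2 \<circ> transpose a1 b1 = y2 \<circ> inv x"
    "y1 = transpose a1 b1 \<circ> x" "y2 = transpose a2 b2 \<circ> y1"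
    by (rule two_step[OF e1 e2])
  obtain a2' b2' a3 b3 where h2: "a2' \<noteq> b2'" "a3 \<noteq> b3" "label y1 y2 = transpose a2' b2'" "label y2 y3 = transpose a3 b3"
    "transpose a3 b3 \<noteq> transpose a2' b2'" "transpose a3 b3 \<circ> transpose a2' b2' = y3 \<circ> inv y1"
    "y2 = transpose a2' b2' \<circ> y1" "y3 = transpose a3 b3 \<circ> y2"
    by (rule two_step[OF e2 e3])
  have s23: "transpose a3 b3 \<noteq> transpose a2 b2" using h2(5) unfolding h1(4)[symmetric] h2(3) .
  have xp: "x permutes {1..n}" using edge_basic(1)[OF e1] .
  have injP: "inj (inv x)" using permutes_inj_on_inv[OF xp, of UNIV] .
  let ?P = "inv x"
  have prod: "transpose a3 b3 \<circ> transpose a2 b2 \<circ> transpose a1 b1 = transpose c d"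
    by (rule cancel_right[OF xp]) (simp add: y3[symmetric] h2(8) h1(7,8) comp_assoc)
  have eq: "transpose a3 b3 \<circ> transpose a2 b2 = transpose c d \<circ> transpose a1 b1"
  proof -
    have "transpose a3 b3 \<circ> transpose a2 b2 = transpose a3 b3 \<circ> transpose a2 b2 \<circ> transpose a1 b1 \<circ> transpose a1 b1"
      by (simp add: comp_assoc)
    thus ?thesis unfolding prod .
  qed
  have iy1: "inv y1 = ?P \<circ> transpose a1 b1" by (rule step_info(3)[OF e1 h1(3) h1(1)])
  have iy2: "inv y2 = inv y1 \<circ> transpose a2 b2" by (rule step_info(3)[OF e2 h1(4) h1(2)])
  have A1: "a1 < b1 \<longleftrightarrow> ?P a1 < ?P b1" by (rule step_info(2)[OF e1 h1(3) h1(1)])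
  have A2: "a2 < b2 \<longleftrightarrow> inv y1 a2 < inv y1 b2" by (rule step_info(2)[OF e2 h1(4) h1(2)])
  have A3: "a3 < b3 \<longleftrightarrow> inv y2 a3 < inv y2 b3" by (rule step_info(2)[OF e3 h2(4) h2(2)])
  show ?thesis
  proof (cases "transpose a1 b1 = transpose c d")
    case True
    have "transpose a3 b3 \<circ> transpose a2 b2 = id" using eq True by simp
    hence "transpose a3 b3 = transpose a2 b2"
      by (metis comp_assoc comp_id transpose_comp_involutory)
    thus ?thesis using s23 by simp
  next
    case ne: False
    show ?thesis
    proof (cases "{a1,b1} \<inter> {c,d} = {}")
      case True
      have dist: "distinct [a1,b1,c,d]" using True h1(1) cd by auto
      from fact_disj[OF dist h1(2) h2(2) s23 eq] h1(5)
      have o: "transpose a2 b2 = transpose c d" "transpose a3 b3 = transpose a1 b1" by auto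
      have A3': "a1 < b1 \<longleftrightarrow> inv y2 a1 < inv y2 b1"
        using step_info(2)[OF e3 h2(4)[unfolded o(2)] h1(1)] .
      have "inv y2 a1 = ?P b1" "inv y2 b1 = ?P a1" using dist unfolding iy2 iy1 o(1) by auto
      hence "a1 < b1 \<longleftrightarrow> ?P b1 < ?P a1" using A3' by simp
      moreover have "?P a1 \<noteq> ?P b1" using injP h1(1) by (auto dest: injD)
      ultimately have False using A1 by linarith
      thus ?thesis ..
    next
      case False
      obtain a b c' where abc: "distinct [a,b,c']" "transpose a1 b1 = transpose a b" "transpose c d = transpose b c'"
        using share_norm[OF h1(1) cd ne False] by blast
      have cdset: "(c = b \<and> d = c') \<or> (c = c' \<and> d = b)" using transpose_eq_cases[OF cd abc(3)] .
      have eq': "transpose a3 b3 \<circ> transpose a2 b2 = transpose b c' \<circ> transpose a b" using eq abc by simp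
      have dP: "?P a \<noteq> ?P b" "?P b \<noteq> ?P c'" "?P a \<noteq> ?P c'" using injP abc(1) by (auto dest: injD)
      have dd: "a \<noteq> b" "b \<noteq> c'" "a \<noteq> c'" using abc(1) by auto
      have Es1: "Eset (label x y1) = {(a,b),(b,a)}" using h1(3) abc(2) Eset_transpose[OF dd(1)] by simp
      have A1': "a < b \<longleftrightarrow> ?P a < ?P b" using step_info(2)[OF e1 h1(3)[unfolded abc(2)] dd(1)] .
      have iy1': "inv y1 = ?P \<circ> transpose a b" using iy1 abc(2) by simp
      have main: "(b < a \<and> a < c' \<or> c' < a \<and> a < b) \<and>
          (?P b < ?P a \<and> ?P a < ?P c' \<or> ?P c' < ?P a \<and> ?P a < ?P b) \<and>
          Eset (label y1 y2) \<subseteq> {a,b,c'} \<times> {a,b,c'} \<and> Eset (label y2 y3) \<subseteq> {a,b,c'} \<times> {a,b,c'} \<and>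
          (\<forall>w\<in>{b,c'}. (w, a) \<in> (Eset (label x y1) \<union> Eset (label y1 y2))\<^sup>*)"
        using fact_share[OF abc(1) h1(2) h2(2) s23 eq']
      proof (elim disjE conjE)
        assume t: "transpose a2 b2 = transpose a b"
        thus ?thesis using h1(5) abc(2) by simp
      next
        assume t: "transpose a2 b2 = transpose b c'" and s: "transpose a3 b3 = transpose a c'"
        have A2': "b < c' \<longleftrightarrow> ?P a < ?P c'"
          using step_info(2)[OF e2 h1(4)[unfolded t] dd(2)] dd unfolding iy1' by simp
        have iy2': "inv y2 = ?P \<circ> transpose a b \<circ> transpose b c'" using iy2 iy1' t by simp
        have A3': "a < c' \<longleftrightarrow> ?P b < ?P a"
          using step_info(2)[OF e3 h2(4)[unfolded s] dd(3)] dd unfolding iy2' by simp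
        have E2: "Eset (label y1 y2) = {(b,c'),(c',b)}" using h1(4) t Eset_transpose[OF dd(2)] by simp
        have E3: "Eset (label y2 y3) = {(a,c'),(c',a)}" using h2(4) s Eset_transpose[OF dd(3)] by simp
        have ord: "(b < a \<and> a < c' \<or> c' < a \<and> a < b) \<and>
          (?P b < ?P a \<and> ?P a < ?P c' \<or> ?P c' < ?P a \<and> ?P a < ?P b)"
          using A1' A2' A3' dP dd by linarith
        have r1: "(b, a) \<in> (Eset (label x y1) \<union> Eset (label y1 y2))\<^sup>*" using Es1 by auto
        have r2: "(c', b) \<in> (Eset (label x y1) \<union> Eset (label y1 y2))\<^sup>*" using E2 by auto
        have r3: "(c', a) \<in> (Eset (label x y1) \<union> Eset (label y1 y2))\<^sup>*" using r1 r2 by (rule rtrancl_trans[rotated])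
        show ?thesis using ord r1 r3 unfolding E2 E3 by blast
      next
        assume t: "transpose a2 b2 = transpose a c'" and s: "transpose a3 b3 = transpose a b"
        have A2': "a < c' \<longleftrightarrow> ?P b < ?P c'"
          using step_info(2)[OF e2 h1(4)[unfolded t] dd(3)] dd unfolding iy1' by simp
        have iy2': "inv y2 = ?P \<circ> transpose a b \<circ> transpose a c'" using iy2 iy1' t by simp
        have A3': "a < b \<longleftrightarrow> ?P c' < ?P a"
          using step_info(2)[OF e3 h2(4)[unfolded s] dd(1)] dd unfolding iy2' by simp
        have E2: "Eset (label y1 y2) = {(a,c'),(c',a)}" using h1(4) t Eset_transpose[OF dd(3)] by simp
        have E3: "Eset (label y2 y3) = {(a,b),(b,a)}" using h2(4) s Eset_transpose[OF dd(1)] by simp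
        have ord: "(b < a \<and> a < c' \<or> c' < a \<and> a < b) \<and>
          (?P b < ?P a \<and> ?P a < ?P c' \<or> ?P c' < ?P a \<and> ?P a < ?P b)"
          using A1' A2' A3' dP dd by linarith
        have r1: "(b, a) \<in> (Eset (label x y1) \<union> Eset (label y1 y2))\<^sup>*" using Es1 by auto
        have r3: "(c', a) \<in> (Eset (label x y1) \<union> Eset (label y1 y2))\<^sup>*" using E2 by auto
        show ?thesis using ord r1 r3 unfolding E2 E3 by blast
      qed
      have E1s: "Eset (label x y1) \<subseteq> {a,b,c'} \<times> {a,b,c'}" using Es1 by auto
      have S: "{c,d,a} = {a,b,c'}" using cdset by auto
      have cz: "c \<in> {b,c'}" using cdset by auto
      have zc: "a \<noteq> c" "a \<noteq> d" using cdset dd by auto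
      have btw: "(c < a \<and> a < d \<or> d < a \<and> a < c) \<and>
          (?P c < ?P a \<and> ?P a < ?P d \<or> ?P d < ?P a \<and> ?P a < ?P c)"
        using cdset
      proof (elim disjE conjE)
        assume "c = b" "d = c'" thus ?thesis using main by blast
      next
        assume "c = c'" "d = b" thus ?thesis using main by blast
      qed
      have r: "(c, a) \<in> (Eset (label x y1) \<union> Eset (label y1 y2))\<^sup>*" using main cz by blast
      show ?thesis
      proof (rule exI[of _ a], intro conjI)
        show "a \<noteq> c" "a \<noteq> d" by (fact zc(1), fact zc(2))
        show "c < a \<and> a < d \<or> d < a \<and> a < c" using btw by blast
        show "?P c < ?P a \<and> ?P a < ?P d \<or> ?P d < ?P a \<and> ?P a < ?P c" using btw by blast
        show "Eset (label x y1) \<subseteq> {c,d,a} \<times> {c,d,a}" unfolding S by (rule E1s)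
        show "Eset (label y1 y2) \<subseteq> {c,d,a} \<times> {c,d,a}" unfolding S using main by blast
        show "Eset (label y2 y3) \<subseteq> {c,d,a} \<times> {c,d,a}" unfolding S using main by blast
        show "(c, a) \<in> (Eset (label x y1) \<union> Eset (label y1 y2))\<^sup>*" by (rule r)
      qed
    qed
  qed
qed

lemma E_in_closure:
  assumes "Eset t \<subseteq> R" shows "Eset t \<subseteq> R\<^sup>*"
  using assms by auto

lemma pair_sub:
  assumes ab: "a \<noteq> b" and cd: "c \<noteq> d" and ne: "transpose c d \<noteq> transpose a b"
    and ab': "a' \<noteq> b'" and cd': "c' \<noteq> d'" and ne': "transpose c' d' \<noteq> transpose a' b'"
    and eq: "transpose c' d' \<circ> transpose a' b' = transpose c d \<circ> transpose a b"
  shows "Eset (transpose a' b') \<union> Eset (transpose c' d') \<subseteq> (Eset (transpose a b) \<union> Eset (transpose c d))\<^sup>*"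
proof (cases "{a,b} \<inter> {c,d} = {}")
  case True
  have dist: "distinct [a,b,c,d]" using True ab cd by auto
  from fact_disj[OF dist ab' cd' ne' eq]
  have "(transpose a' b' = transpose a b \<and> transpose c' d' = transpose c d) \<or>
        (transpose a' b' = transpose c d \<and> transpose c' d' = transpose a b)" .
  thus ?thesis by auto
next
  case False
  obtain x y z where xyz: "distinct [x,y,z]" "transpose a b = transpose x y" "transpose c d = transpose y z"
    using share_norm[OF ab cd ne[symmetric] False] by blast
  have dd: "x \<noteq> y" "y \<noteq> z" "x \<noteq> z" using xyz(1) by auto
  let ?R = "Eset (transpose a b) \<union> Eset (transpose c d)"
  have R: "?R = {(x,y),(y,x),(y,z),(z,y)}"
    unfolding xyz(2,3) Eset_transpose[OF dd(1)] Eset_transpose[OF dd(2)] by auto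
  have xz: "(x,z) \<in> ?R\<^sup>*" "(z,x) \<in> ?R\<^sup>*"
  proof -
    have "(x,y) \<in> ?R\<^sup>*" "(y,z) \<in> ?R\<^sup>*" "(z,y) \<in> ?R\<^sup>*" "(y,x) \<in> ?R\<^sup>*" unfolding R by auto
    thus "(x,z) \<in> ?R\<^sup>*" "(z,x) \<in> ?R\<^sup>*" by (meson rtrancl_trans)+
  qed
  have eq': "transpose c' d' \<circ> transpose a' b' = transpose y z \<circ> transpose x y" using eq xyz by simp
  from fact_share[OF xyz(1) ab' cd' ne' eq'] show ?thesis
  proof (elim disjE conjE)
    assume "transpose a' b' = transpose x y" "transpose c' d' = transpose y z"
    thus ?thesis using xyz by auto
  next
    assume t: "transpose a' b' = transpose y z" "transpose c' d' = transpose x z"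
    show ?thesis unfolding t Eset_transpose[OF dd(2)] Eset_transpose[OF dd(3)] using xz unfolding R by auto
  next
    assume t: "transpose a' b' = transpose x z" "transpose c' d' = transpose x y"
    show ?thesis unfolding t Eset_transpose[OF dd(1)] Eset_transpose[OF dd(3)] using xz unfolding R by auto
  qed
qed

lemma closure_swap:
  assumes "A' \<subseteq> A\<^sup>*" "A \<subseteq> A'\<^sup>*"
  shows "(A \<union> R)\<^sup>* = (A' \<union> R)\<^sup>*"
proof -
  have "A' \<union> R \<subseteq> (A \<union> R)\<^sup>*" using assms(1) rtrancl_mono[of A "A \<union> R"] by auto
  hence 1: "(A' \<union> R)\<^sup>* \<subseteq> (A \<union> R)\<^sup>*" by (rule rtrancl_subset_rtrancl)
  have "A \<union> R \<subseteq> (A' \<union> R)\<^sup>*" using assms(2) rtrancl_mono[of A' "A' \<union> R"] by auto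
  hence 2: "(A \<union> R)\<^sup>* \<subseteq> (A' \<union> R)\<^sup>*" by (rule rtrancl_subset_rtrancl)
  show ?thesis using 1 2 by blast
qed

lemma two_step_sub:
  assumes e1: "bruhat_edge n x y" "bruhat_edge n y z" and e2: "bruhat_edge n x y'" "bruhat_edge n y' z"
  shows "Eset (label x y') \<union> Eset (label y' z) \<subseteq> (Eset (label x y) \<union> Eset (label y z))\<^sup>*"
proof -
  obtain a b c d where h1: "a \<noteq> b" "c \<noteq> d" "label x y = transpose a b" "label y z = transpose c d"
    "transpose c d \<noteq> transpose a b" "transpose c d \<circ> transpose a b = z \<circ> inv x"
    "y = transpose a b \<circ> x" "z = transpose c d \<circ> y"
    by (rule two_step[OF e1])
  obtain a' b' c' d' where h2: "a' \<noteq> b'" "c' \<noteq> d'" "label x y' = transpose a' b'" "label y' z = transpose c' d'"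
    "transpose c' d' \<noteq> transpose a' b'" "transpose c' d' \<circ> transpose a' b' = z \<circ> inv x"
    "y' = transpose a' b' \<circ> x" "z = transpose c' d' \<circ> y'"
    by (rule two_step[OF e2])
  have eq: "transpose c' d' \<circ> transpose a' b' = transpose c d \<circ> transpose a b" using h1(6) h2(6) by simp
  show ?thesis unfolding h1(3,4) h2(3,4) by (rule pair_sub[OF h1(1,2,5) h2(1,2,5) eq])
qed

definition Lb :: "(nat \<Rightarrow> nat) list \<Rightarrow> nat \<Rightarrow> (nat \<Rightarrow> nat)" where
  "Lb r k = label (r ! k) (r ! Suc k)"

definition EP :: "(nat \<Rightarrow> nat) list \<Rightarrow> (nat \<times> nat) set" where
  "EP r = Eset (Lb r 0) \<union> Eset (Lb r 1) \<union> Eset (Lb r 2) \<union> Eset (Lb r 3)"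

lemma flip_ok:
  assumes r: "r \<in> paths n 4 u v" and i: "1 \<le> i" "i \<le> 3"
  shows "flip n i r \<in> paths n 4 u v \<and> (EP (flip n i r))\<^sup>* = (EP r)\<^sup>*"
proof (cases "\<exists>y. y \<noteq> r ! i \<and> bruhat_edge n (r ! (i - 1)) y \<and> bruhat_edge n y (r ! Suc i)")
  case False
  have "flip n i r = r" unfolding flip_def by (rule if_not_P[OF False])
  then show ?thesis using r by simp
next
  case True
  let ?Q = "\<lambda>y. y \<noteq> r ! i \<and> bruhat_edge n (r ! (i - 1)) y \<and> bruhat_edge n y (r ! Suc i)"
  have len: "length r = 5" and ed: "\<And>k. k < 4 \<Longrightarrow> bruhat_edge n (r ! k) (r ! Suc k)"
    and r0: "r ! 0 = u" and r4: "r ! 4 = v"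
    using r by (auto simp: paths_def)
  have eA: "bruhat_edge n (r ! (i - 1)) (r ! i)" using ed[of "i - 1"] i by simp
  have eB: "bruhat_edge n (r ! i) (r ! Suc i)" using ed[of i] i by simp
  have ex1: "\<exists>!y. ?Q y"
  proof (rule ex_ex1I)
    show "\<exists>y. ?Q y" using True .
  next
    fix y y' assume q: "?Q y" "?Q y'"
    show "y = y'"
    proof (rule ccontr)
      assume "y \<noteq> y'"
      thus False using mid_unique[OF eA eB, of y y'] q by blast
    qed
  qed
  define y0 where "y0 = (THE y. ?Q y)"
  have Qy0: "?Q y0" unfolding y0_def using theI'[OF ex1] .
  have fl: "flip n i r = r[i := y0]" unfolding flip_def y0_def using True by simp
  define r' where "r' = r[i := y0]"
  have len': "length r' = 5" unfolding r'_def using len by simp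
  have nth': "r' ! k = (if k = i then y0 else r ! k)" if "k < 5" for k
    unfolding r'_def using that len by simp
  have r'0: "r' ! 0 = u" using nth'[of 0] i r0 by simp
  have r'4: "r' ! 4 = v" using nth'[of 4] i r4 by simp
  have ed': "bruhat_edge n (r' ! k) (r' ! Suc k)" if "k < 4" for k
  proof -
    consider "k = i - 1" | "k = i" | "k \<noteq> i - 1" "k \<noteq> i" by blast
    thus ?thesis
    proof cases
      case 1
      hence "r' ! k = r ! (i - 1)" "r' ! Suc k = y0" using nth'[of k] nth'[of "Suc k"] i that by auto
      thus ?thesis using Qy0 by simp
    next
      case 2
      hence "r' ! k = y0" "r' ! Suc k = r ! Suc i" using nth'[of k] nth'[of "Suc k"] i that by auto
      thus ?thesis using Qy0 by simp
    next
      case 3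
      hence "r' ! k = r ! k" "r' ! Suc k = r ! Suc k" using nth'[of k] nth'[of "Suc k"] i that by auto
      thus ?thesis using ed[OF that] by simp
    qed
  qed
  have pr': "r' \<in> paths n 4 u v" unfolding paths_def using len' r'0 r'4 ed' by simp
  have Lsame: "Lb r' k = Lb r k" if "k < 4" "k \<noteq> i - 1" "k \<noteq> i" for k
  proof -
    have "r' ! k = r ! k" "r' ! Suc k = r ! Suc k" using nth'[of k] nth'[of "Suc k"] that i by auto
    thus ?thesis unfolding Lb_def by simp
  qed
  have La: "Lb r' (i - 1) = label (r ! (i - 1)) y0" "Lb r' i = label y0 (r ! Suc i)"
    unfolding Lb_def using nth'[of "i - 1"] nth'[of i] nth'[of "Suc i"] i by auto
  have Lo: "Lb r (i - 1) = label (r ! (i - 1)) (r ! i)" "Lb r i = label (r ! i) (r ! Suc i)"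
    unfolding Lb_def using i by auto
  let ?A = "Eset (Lb r (i - 1)) \<union> Eset (Lb r i)"
  let ?A' = "Eset (Lb r' (i - 1)) \<union> Eset (Lb r' i)"
  have s1: "?A' \<subseteq> ?A\<^sup>*" unfolding La Lo using two_step_sub[OF eA eB] Qy0 by blast
  have s2: "?A \<subseteq> ?A'\<^sup>*" unfolding La Lo using two_step_sub[of n "r ! (i - 1)" y0 "r ! Suc i" "r ! i"] Qy0 eA eB by blast
  have cl: "(?A \<union> R)\<^sup>* = (?A' \<union> R)\<^sup>*" for R by (rule closure_swap[OF s1 s2])
  have "(EP r')\<^sup>* = (EP r)\<^sup>*"
  proof -
    consider "i = 1" | "i = 2" | "i = 3" using i by linarith
    thus ?thesis
    proof cases
      case 1
      have "EP r = ?A \<union> (Eset (Lb r 2) \<union> Eset (Lb r 3))" "EP r' = ?A' \<union> (Eset (Lb r 2) \<union> Eset (Lb r 3))"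
        unfolding EP_def using 1 Lsame[of 2] Lsame[of 3] by auto
      thus ?thesis using cl by simp
    next
      case 2
      have "EP r = ?A \<union> (Eset (Lb r 0) \<union> Eset (Lb r 3))" "EP r' = ?A' \<union> (Eset (Lb r 0) \<union> Eset (Lb r 3))"
        unfolding EP_def using 2 Lsame[of 0] Lsame[of 3] by auto
      thus ?thesis using cl by simp
    next
      case 3
      have "EP r = ?A \<union> (Eset (Lb r 0) \<union> Eset (Lb r 1))" "EP r' = ?A' \<union> (Eset (Lb r 0) \<union> Eset (Lb r 1))"
        unfolding EP_def using 3 Lsame[of 0] Lsame[of 1] by auto
      thus ?thesis using cl by simp
    qed
  qed
  thus ?thesis using pr' fl r'_def by simp
qed

lemma orbit_ok:
  assumes p0: "p0 \<in> paths n 4 u v" and q: "(p0, q) \<in> (flip_rel n 4)\<^sup>*"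
  shows "q \<in> paths n 4 u v \<and> (EP q)\<^sup>* = (EP p0)\<^sup>*"
  using q
proof (induction rule: rtrancl_induct)
  case base
  then show ?case using p0 by simp
next
  case (step y z)
  from step.hyps(2) obtain i where z: "z = flip n i y" "1 \<le> i" "i \<le> 3"
    by (auto simp: flip_rel_def)
  from flip_ok[of y n u v i] step.IH z show ?case by simp
qed

lemma geo:
  fixes P :: "nat \<Rightarrow> nat" and c d c' d' z z' :: nat
  assumes inj: "inj P"
    and ne: "c \<noteq> d" "c' \<noteq> d'" "z \<noteq> c" "z \<noteq> d" "z' \<noteq> c'" "z' \<noteq> d'"
    and m1: "z' \<in> {c,d,z}" and m2: "z \<in> {c',d',z'}"
    and i1: "{c',d'} \<inter> {c,d,z} \<noteq> {}" and i2: "{c,d} \<inter> {c',d',z'} \<noteq> {}"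
    and nef: "{c,d} \<noteq> {c',d'}"
    and a1: "c' < d' \<longleftrightarrow> P c' < P d'"
    and a2: "c < d \<longleftrightarrow> P (transpose c' d' c) < P (transpose c' d' d)"
    and b1: "c < z \<and> z < d \<or> d < z \<and> z < c"
    and b2: "P (transpose c' d' c) < P (transpose c' d' z) \<and> P (transpose c' d' z) < P (transpose c' d' d) \<or>
             P (transpose c' d' d) < P (transpose c' d' z) \<and> P (transpose c' d' z) < P (transpose c' d' c)"
    and b3: "c' < z' \<and> z' < d' \<or> d' < z' \<and> z' < c'"
    and b4: "P c' < P z' \<and> P z' < P d' \<or> P d' < P z' \<and> P z' < P c'"
  shows False
proof -
  have injP: "P x = P y \<longleftrightarrow> x = y" for x y using inj by (auto dest: injD)
  from m1 consider "z' = c" | "z' = d" | "z' = z" by auto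
  thus False
  proof cases
    case 1
    from m2 consider "z = c'" | "z = d'" by (metis "1" empty_iff insert_iff ne(3))
    thus False
    proof cases
      case 1
      have T: "transpose c' d' c = c" "transpose c' d' z = d'"
        using \<open>z' = c\<close> 1 ne by auto
      show ?thesis
      proof (cases "d = d'")
        case True
        have T2: "transpose c' d' d = c'" using True by simp
        show ?thesis using a1 a2 b1 b2 b3 b4 unfolding T T2 \<open>z' = c\<close> 1 True transpose_apply_first transpose_apply_second by linarith
      next
        case False
        have T2: "transpose c' d' d = d" using False \<open>z = c'\<close> ne by auto
        show ?thesis using a1 a2 b1 b2 b3 b4 False unfolding T T2 \<open>z' = c\<close> 1 transpose_apply_first transpose_apply_second by linarith
      qed
    next
      case 2
      have T: "transpose c' d' c = c" "transpose c' d' z = c'"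
        using \<open>z' = c\<close> 2 ne by auto
      show ?thesis
      proof (cases "d = c'")
        case True
        have T2: "transpose c' d' d = d'" using True by simp
        show ?thesis using a1 a2 b1 b2 b3 b4 unfolding T T2 \<open>z' = c\<close> 2 True transpose_apply_first transpose_apply_second by linarith
      next
        case False
        have T2: "transpose c' d' d = d" using False \<open>z = d'\<close> ne by auto
        show ?thesis using a1 a2 b1 b2 b3 b4 False unfolding T T2 \<open>z' = c\<close> 2 transpose_apply_first transpose_apply_second by linarith
      qed
    qed
  next
    case 2
    from m2 consider "z = c'" | "z = d'" by (metis "2" empty_iff insert_iff ne(4))
    thus False
    proof cases
      case 1
      have T: "transpose c' d' d = d" "transpose c' d' z = d'"
        using \<open>z' = d\<close> 1 ne by auto
      show ?thesis
      proof (cases "c = d'")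
        case True
        have T2: "transpose c' d' c = c'" using True by simp
        show ?thesis using a1 a2 b1 b2 b3 b4 unfolding T T2 \<open>z' = d\<close> 1 True transpose_apply_first transpose_apply_second by linarith
      next
        case False
        have T2: "transpose c' d' c = c" using False \<open>z = c'\<close> ne by auto
        show ?thesis using a1 a2 b1 b2 b3 b4 False unfolding T T2 \<open>z' = d\<close> 1 transpose_apply_first transpose_apply_second by linarith
      qed
    next
      case 2
      have T: "transpose c' d' d = d" "transpose c' d' z = c'"
        using \<open>z' = d\<close> 2 ne by auto
      show ?thesis
      proof (cases "c = c'")
        case True
        have T2: "transpose c' d' c = d'" using True by simp
        show ?thesis using a1 a2 b1 b2 b3 b4 unfolding T T2 \<open>z' = d\<close> 2 True transpose_apply_first transpose_apply_second by linarith
      next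
        case False
        have T2: "transpose c' d' c = c" using False \<open>z = d'\<close> ne by auto
        show ?thesis using a1 a2 b1 b2 b3 b4 False unfolding T T2 \<open>z' = d\<close> 2 transpose_apply_first transpose_apply_second by linarith
      qed
    qed
  next
    case 3
    have zn: "z \<noteq> c'" "z \<noteq> d'" using 3 ne by auto
    have Tz: "transpose c' d' z = z" using zn by simp
    have sh: "c = c' \<or> c = d' \<or> d = c' \<or> d = d'" using i1 zn by auto
    consider "c = c'" "d \<noteq> d'" | "c = d'" "d \<noteq> c'" | "d = c'" "c \<noteq> d'" | "d = d'" "c \<noteq> c'"
      using sh nef ne by blast
    thus False
    proof cases
      case 1
      have T: "transpose c' d' c = d'" "transpose c' d' d = d" using 1 ne by auto
      show ?thesis using a1 a2 b1 b2 b3 b4 unfolding T Tz \<open>z' = z\<close> 1(1) transpose_apply_first transpose_apply_second by linarith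
    next
      case 2
      have T: "transpose c' d' c = c'" "transpose c' d' d = d" using 2 ne by auto
      show ?thesis using a1 a2 b1 b2 b3 b4 unfolding T Tz \<open>z' = z\<close> 2(1) transpose_apply_first transpose_apply_second by linarith
    next
      case 3
      have T: "transpose c' d' d = d'" "transpose c' d' c = c" using 3 ne by auto
      show ?thesis using a1 a2 b1 b2 b3 b4 unfolding T Tz \<open>z' = z\<close> 3(1) transpose_apply_first transpose_apply_second by linarith
    next
      case 4
      have T: "transpose c' d' d = c'" "transpose c' d' c = c" using 4 ne by auto
      show ?thesis using a1 a2 b1 b2 b3 b4 unfolding T Tz \<open>z' = z\<close> 4(1) transpose_apply_first transpose_apply_second by linarith
    qed
  qed
qed

lemma path_basic:
  assumes r: "r \<in> paths n 4 u v"
  shows "length r = 5" "r ! 0 = u" "r ! 4 = v" "\<And>k. k < 4 \<Longrightarrow> bruhat_edge n (r ! k) (r ! Suc k)"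
  using r by (auto simp: paths_def)

lemma path_len_mono:
  assumes r: "r \<in> paths n 4 u v"
  shows "k < m \<Longrightarrow> m \<le> 4 \<Longrightarrow> len n (r ! k) < len n (r ! m)"
proof (induction m)
  case 0
  then show ?case by simp
next
  case (Suc m)
  have e: "len n (r ! m) < len n (r ! Suc m)"
    using edge_basic(3)[OF path_basic(4)[OF r, of m]] Suc.prems by simp
  show ?case
  proof (cases "k = m")
    case True
    then show ?thesis using e by simp
  next
    case False
    then show ?thesis using Suc e by simp
  qed
qed

lemma edge_sign:
  assumes e: "bruhat_edge n x y" shows "sign y = - sign x"
proof -
  obtain \<alpha> \<beta> where ab: "\<alpha> \<noteq> \<beta>" "label x y = transpose \<alpha> \<beta>" using edge_label_ex[OF e] by blast
  have y: "y = transpose \<alpha> \<beta> \<circ> x" by (rule step_info(1)[OF e ab(2) ab(1)])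
  have px: "permutation x" using permutes_imp_permutation[OF _ edge_basic(1)[OF e]] by simp
  have "sign y = sign (transpose \<alpha> \<beta>) * sign x" unfolding y by (rule sign_compose[OF permutation_swap_id px])
  thus ?thesis using ab(1) by (simp add: sign_swap_id)
qed

lemma path_sign:
  assumes r: "r \<in> paths n 4 u v"
  shows "k \<le> 4 \<Longrightarrow> sign (r ! k) = (-1) ^ k * sign u"
proof (induction k)
  case 0
  then show ?case using path_basic(2)[OF r] by simp
next
  case (Suc k)
  have "sign (r ! Suc k) = - sign (r ! k)" using edge_sign[OF path_basic(4)[OF r, of k]] Suc.prems by simp
  then show ?case using Suc by simp
qed

lemma closed_set:
  assumes E: "\<And>x y. (x,y) \<in> E \<Longrightarrow> (x \<in> S \<longleftrightarrow> y \<in> S)" and xy: "(x,y) \<in> E\<^sup>*"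
  shows "x \<in> S \<longleftrightarrow> y \<in> S"
  using xy by (induction rule: rtrancl_induct) (auto dest: E)

lemma main_13:
  assumes p: "p \<in> paths n 4 u v" and q: "q \<in> paths n 4 u v"
    and cl: "(EP p)\<^sup>* = (EP q)\<^sup>*" and pq: "p ! 1 = q ! 3"
  shows False
proof -
  define a where "a = p ! 1"
  have eua: "bruhat_edge n u a" using path_basic(4)[OF p, of 0] path_basic(2)[OF p] unfolding a_def by simp
  have eav: "bruhat_edge n a v" using path_basic(4)[OF q, of 3] path_basic(3)[OF q] pq unfolding a_def by simp
  obtain c' d' where e: "c' \<noteq> d'" "label u a = transpose c' d'" using edge_label_ex[OF eua] by blast
  obtain c d where f: "c \<noteq> d" "label a v = transpose c d" using edge_label_ex[OF eav] by blast
  have aeq: "a = transpose c' d' \<circ> u" by (rule step_info(1)[OF eua e(2) e(1)])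
  have veq: "v = transpose c d \<circ> a" by (rule step_info(1)[OF eav f(2) f(1)])
  have up: "u permutes {1..n}" using edge_basic(1)[OF eua] .
  have ia: "inv a = inv u \<circ> transpose c' d'" by (rule step_info(3)[OF eua e(2) e(1)])
  have a1: "c' < d' \<longleftrightarrow> inv u c' < inv u d'" by (rule step_info(2)[OF eua e(2) e(1)])
  have a2: "c < d \<longleftrightarrow> inv a c < inv a d" by (rule step_info(2)[OF eav f(2) f(1)])
  have ep: "bruhat_edge n a (p ! 2)" "bruhat_edge n (p ! 2) (p ! 3)" "bruhat_edge n (p ! 3) (p ! 4)"
    using path_basic(4)[OF p, of 1] path_basic(4)[OF p, of 2] path_basic(4)[OF p, of 3] unfolding a_def
    by (simp_all add: numeral_eq_Suc)
  have eq: "bruhat_edge n u (q ! 1)" "bruhat_edge n (q ! 1) (q ! 2)" "bruhat_edge n (q ! 2) a"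
    using path_basic(4)[OF q, of 0] path_basic(4)[OF q, of 1] path_basic(4)[OF q, of 2]
      path_basic(2)[OF q] pq unfolding a_def
    by (simp_all add: numeral_eq_Suc)
  have p4: "p ! 4 = transpose c d \<circ> a" using path_basic(3)[OF p] veq by simp
  obtain z where zz: "z \<noteq> c \<and> z \<noteq> d \<and> (c < z \<and> z < d \<or> d < z \<and> z < c) \<and>
     (inv a c < inv a z \<and> inv a z < inv a d \<or> inv a d < inv a z \<and> inv a z < inv a c) \<and>
     Eset (label a (p ! 2)) \<subseteq> {c,d,z} \<times> {c,d,z} \<and> Eset (label (p ! 2) (p ! 3)) \<subseteq> {c,d,z} \<times> {c,d,z} \<and>
     Eset (label (p ! 3) (p ! 4)) \<subseteq> {c,d,z} \<times> {c,d,z} \<and>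
     (c, z) \<in> (Eset (label a (p ! 2)) \<union> Eset (label (p ! 2) (p ! 3)))\<^sup>*"
    using three_path[OF ep p4 f(1)] by (rule exE)
  note z = zz[THEN conjunct1] zz[THEN conjunct2, THEN conjunct1]
    zz[THEN conjunct2, THEN conjunct2, THEN conjunct1]
    zz[THEN conjunct2, THEN conjunct2, THEN conjunct2, THEN conjunct1]
    zz[THEN conjunct2, THEN conjunct2, THEN conjunct2, THEN conjunct2, THEN conjunct1]
    zz[THEN conjunct2, THEN conjunct2, THEN conjunct2, THEN conjunct2, THEN conjunct2, THEN conjunct1]
    zz[THEN conjunct2, THEN conjunct2, THEN conjunct2, THEN conjunct2, THEN conjunct2, THEN conjunct2, THEN conjunct1]
    zz[THEN conjunct2, THEN conjunct2, THEN conjunct2, THEN conjunct2, THEN conjunct2, THEN conjunct2, THEN conjunct2]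
  obtain z' where zz': "z' \<noteq> c' \<and> z' \<noteq> d' \<and> (c' < z' \<and> z' < d' \<or> d' < z' \<and> z' < c') \<and>
     (inv u c' < inv u z' \<and> inv u z' < inv u d' \<or> inv u d' < inv u z' \<and> inv u z' < inv u c') \<and>
     Eset (label u (q ! 1)) \<subseteq> {c',d',z'} \<times> {c',d',z'} \<and> Eset (label (q ! 1) (q ! 2)) \<subseteq> {c',d',z'} \<times> {c',d',z'} \<and>
     Eset (label (q ! 2) a) \<subseteq> {c',d',z'} \<times> {c',d',z'} \<and>
     (c', z') \<in> (Eset (label u (q ! 1)) \<union> Eset (label (q ! 1) (q ! 2)))\<^sup>*"
    using three_path[OF eq aeq e(1)] by (rule exE)
  note z' = zz'[THEN conjunct1] zz'[THEN conjunct2, THEN conjunct1]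
    zz'[THEN conjunct2, THEN conjunct2, THEN conjunct1]
    zz'[THEN conjunct2, THEN conjunct2, THEN conjunct2, THEN conjunct1]
    zz'[THEN conjunct2, THEN conjunct2, THEN conjunct2, THEN conjunct2, THEN conjunct1]
    zz'[THEN conjunct2, THEN conjunct2, THEN conjunct2, THEN conjunct2, THEN conjunct2, THEN conjunct1]
    zz'[THEN conjunct2, THEN conjunct2, THEN conjunct2, THEN conjunct2, THEN conjunct2, THEN conjunct2, THEN conjunct1]
    zz'[THEN conjunct2, THEN conjunct2, THEN conjunct2, THEN conjunct2, THEN conjunct2, THEN conjunct2, THEN conjunct2]
  have LP: "Lb p 0 = transpose c' d'" "Lb p 1 = label a (p ! 2)" "Lb p 2 = label (p ! 2) (p ! 3)"
    "Lb p 3 = label (p ! 3) (p ! 4)"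
    unfolding Lb_def a_def using path_basic(2)[OF p] e(2) a_def by (simp_all add: numeral_eq_Suc)
  have LQ: "Lb q 0 = label u (q ! 1)" "Lb q 1 = label (q ! 1) (q ! 2)" "Lb q 2 = label (q ! 2) a"
    "Lb q 3 = transpose c d"
    unfolding Lb_def using path_basic(2,3)[OF q] f(2) pq a_def by (simp_all add: numeral_eq_Suc)
  have EPp: "EP p = {(c',d'),(d',c')} \<union> Eset (label a (p ! 2)) \<union> Eset (label (p ! 2) (p ! 3)) \<union>
      Eset (label (p ! 3) (p ! 4))"
    unfolding EP_def LP Eset_transpose[OF e(1)] ..
  have EPq: "EP q = Eset (label u (q ! 1)) \<union> Eset (label (q ! 1) (q ! 2)) \<union> Eset (label (q ! 2) a) \<union>
      {(c,d),(d,c)}"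
    unfolding EP_def LQ Eset_transpose[OF f(1)] ..
  have r1: "(c', z') \<in> (EP p)\<^sup>*"
  proof -
    have "Eset (label u (q ! 1)) \<union> Eset (label (q ! 1) (q ! 2)) \<subseteq> EP q" unfolding EPq by blast
    hence "(c', z') \<in> (EP q)\<^sup>*" using z'(8) rtrancl_mono by blast
    thus ?thesis using cl by simp
  qed
  have r2: "(c, z) \<in> (EP q)\<^sup>*"
  proof -
    have "Eset (label a (p ! 2)) \<union> Eset (label (p ! 2) (p ! 3)) \<subseteq> EP p" unfolding EPp by blast
    hence "(c, z) \<in> (EP p)\<^sup>*" using z(8) rtrancl_mono by blast
    thus ?thesis using cl by simp
  qed
  have m1: "z' \<in> {c,d,z} \<and> {c',d'} \<inter> {c,d,z} \<noteq> {}"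
  proof (cases "{c',d'} \<inter> {c,d,z} = {}")
    case True
    have "c' \<in> {c',d'} \<longleftrightarrow> z' \<in> {c',d'}"
    proof (rule closed_set[OF _ r1])
      fix x y assume "(x,y) \<in> EP p"
      thus "x \<in> {c',d'} \<longleftrightarrow> y \<in> {c',d'}" unfolding EPp using z(5,6,7) True by blast
    qed
    thus ?thesis using z'(1,2) by simp
  next
    case False
    have "c' \<in> {c',d',c,d,z} \<longleftrightarrow> z' \<in> {c',d',c,d,z}"
    proof (rule closed_set[OF _ r1])
      fix x y assume "(x,y) \<in> EP p"
      thus "x \<in> {c',d',c,d,z} \<longleftrightarrow> y \<in> {c',d',c,d,z}" unfolding EPp using z(5,6,7) by blast
    qed
    thus ?thesis using z'(1,2) False by simp
  qed
  have m2: "z \<in> {c',d',z'} \<and> {c,d} \<inter> {c',d',z'} \<noteq> {}"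
  proof (cases "{c,d} \<inter> {c',d',z'} = {}")
    case True
    have "c \<in> {c,d} \<longleftrightarrow> z \<in> {c,d}"
    proof (rule closed_set[OF _ r2])
      fix x y assume "(x,y) \<in> EP q"
      thus "x \<in> {c,d} \<longleftrightarrow> y \<in> {c,d}" unfolding EPq using z'(5,6,7) True by blast
    qed
    thus ?thesis using z(1,2) by simp
  next
    case False
    have "c \<in> {c,d,c',d',z'} \<longleftrightarrow> z \<in> {c,d,c',d',z'}"
    proof (rule closed_set[OF _ r2])
      fix x y assume "(x,y) \<in> EP q"
      thus "x \<in> {c,d,c',d',z'} \<longleftrightarrow> y \<in> {c,d,c',d',z'}" unfolding EPq using z'(5,6,7) by blast
    qed
    thus ?thesis using z(1,2) False by simp
  qed
  have nef: "{c,d} \<noteq> {c',d'}"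
  proof
    assume "{c,d} = {c',d'}"
    hence "transpose c d = transpose c' d'" by (auto simp: doubleton_eq_iff transpose_commute)
    hence "v = u" unfolding veq aeq by (simp add: comp_assoc[symmetric])
    moreover have "len n (p ! 0) < len n (p ! 4)" by (rule path_len_mono[OF p]) auto
    ultimately show False using path_basic(2,3)[OF p] by simp
  qed
  have injP: "inj (inv u)" using permutes_inj_on_inv[OF up, of UNIV] .
  have a2': "c < d \<longleftrightarrow> inv u (transpose c' d' c) < inv u (transpose c' d' d)" using a2 unfolding ia by simp
  have z4: "inv u (transpose c' d' c) < inv u (transpose c' d' z) \<and> inv u (transpose c' d' z) < inv u (transpose c' d' d) \<or>
             inv u (transpose c' d' d) < inv u (transpose c' d' z) \<and> inv u (transpose c' d' z) < inv u (transpose c' d' c)"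
    using z(4) unfolding ia by simp
  show False
    by (rule geo[OF injP f(1) e(1) z(1,2) z'(1,2) m1[THEN conjunct1] m2[THEN conjunct1]
          m1[THEN conjunct2] m2[THEN conjunct2] nef a1 a2' z(3) z4 z'(3) z'(4)])
qed

lemma neg_one_pow_eq: "(-1::int) ^ i = (-1) ^ j \<Longrightarrow> (even i \<longleftrightarrow> even j)"
  by (cases "even i"; cases "even j") auto

lemma key_lt:
  assumes p: "p \<in> paths n 4 u v" and q: "q \<in> paths n 4 u v"
    and cl: "(EP p)\<^sup>* = (EP q)\<^sup>*" and ij: "i < j" "j \<le> 4" and eq: "p ! i = q ! j"
  shows False
proof -
  have "sign (p ! i) = (-1) ^ i * sign u" using path_sign[OF p] ij by simp
  moreover have "sign (q ! j) = (-1) ^ j * sign u" using path_sign[OF q] ij by simp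
  ultimately have "(-1::int) ^ i * sign u = (-1) ^ j * sign u" using eq by simp
  hence "(-1::int) ^ i = (-1) ^ j" by simp
  hence par: "even i \<longleftrightarrow> even j" by (rule neg_one_pow_eq)
  show False
  proof (cases "i = 0")
    case True
    have "len n (q ! 0) < len n (q ! j)" using path_len_mono[OF q] ij True by simp
    thus False using eq True path_basic(2)[OF p] path_basic(2)[OF q] by simp
  next
    case i0: False
    show False
    proof (cases "j = 4")
      case True
      have "len n (p ! i) < len n (p ! 4)" using path_len_mono[OF p] ij True by simp
      thus False using eq True path_basic(3)[OF p] path_basic(3)[OF q] by simp
    next
      case False
      have "i = 1 \<and> j = 3" using i0 False ij par by presburger
      thus False using main_13[OF p q cl] eq by simp
    qed
  qed
qed

theorem proposition7p7:
  fixes n :: nat and F :: "(nat \<Rightarrow> nat) list set"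
  assumes "is_flipclass n 4 F"
  shows "labelled_iso (S_vert F) (S_edges F) (TS_vert F) (TS_edges F)"
proof -
  obtain u v p0 where p0: "p0 \<in> paths n 4 u v" and F: "F = {q. (p0, q) \<in> (flip_rel n 4)\<^sup>*}"
    using assms unfolding is_flipclass_def by blast
  have inF: "q \<in> paths n 4 u v \<and> (EP q)\<^sup>* = (EP p0)\<^sup>*" if "q \<in> F" for q
    using orbit_ok[OF p0] that F by blast
  have len5: "length q = 5" if "q \<in> F" for q using path_basic(1) inF[OF that] by blast
  have key: "i = j" if "p \<in> F" "q \<in> F" "i < length p" "j < length q" "p ! i = q ! j" for p q i j
  proof (rule ccontr)
    assume "i \<noteq> j"
    hence "i < j \<or> j < i" by linarith
    thus False
    proof
      assume "i < j"
      show False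
        by (rule key_lt[of p n u v q i j]) (use inF[OF that(1)] inF[OF that(2)] \<open>i < j\<close> that len5 in auto)
    next
      assume "j < i"
      show False
        by (rule key_lt[of q n u v p j i]) (use inF[OF that(1)] inF[OF that(2)] \<open>j < i\<close> that len5 in auto)
    qed
  qed
  define tm where "tm a = (THE i. \<exists>p\<in>F. i < length p \<and> p ! i = a)" for a
  have tm_eq: "tm (p ! i) = i" if "p \<in> F" "i < length p" for p i
    unfolding tm_def
  proof (rule the_equality)
    show "\<exists>p'\<in>F. i < length p' \<and> p' ! i = p ! i" using that by blast
  next
    fix j assume "\<exists>p'\<in>F. j < length p' \<and> p' ! j = p ! i"
    then obtain p' where "p' \<in> F" "j < length p'" "p' ! j = p ! i" by blast
    thus "j = i" using key[of p' p j i] that by simp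
  qed
  define \<phi> where "\<phi> a = (a, tm a)" for a
  show ?thesis unfolding labelled_iso_def
  proof (rule exI[of _ \<phi>], intro conjI ballI allI)
    show "bij_betw \<phi> (S_vert F) (TS_vert F)"
      unfolding bij_betw_def
    proof
      show "inj_on \<phi> (S_vert F)" unfolding \<phi>_def by (rule inj_onI) simp
      show "\<phi> ` S_vert F = TS_vert F"
      proof (intro equalityI subsetI)
        fix w assume "w \<in> \<phi> ` S_vert F"
        then obtain a where a: "a \<in> S_vert F" "w = \<phi> a" by blast
        then obtain p where p: "p \<in> F" "a \<in> set p" unfolding S_vert_def by blast
        then obtain i where i: "i < length p" "p ! i = a" by (meson in_set_conv_nth)
        have "w = (a, i)" using a(2) tm_eq[OF p(1) i(1)] i(2) unfolding \<phi>_def by simp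
        thus "w \<in> TS_vert F" unfolding TS_vert_def using p(1) i by blast
      next
        fix w assume "w \<in> TS_vert F"
        then obtain a i p where w: "w = (a, i)" "p \<in> F" "i < length p" "p ! i = a"
          unfolding TS_vert_def by blast
        have "a \<in> S_vert F" unfolding S_vert_def using w nth_mem by blast
        moreover have "\<phi> a = w" unfolding \<phi>_def using tm_eq[OF w(2,3)] w by simp
        ultimately show "w \<in> \<phi> ` S_vert F" by blast
      qed
    qed
  next
    fix a b t assume a: "a \<in> S_vert F" and b: "b \<in> S_vert F"
    show "(a, t, b) \<in> S_edges F \<longleftrightarrow> (\<phi> a, t, \<phi> b) \<in> TS_edges F"
    proof
      assume "(a, t, b) \<in> S_edges F"
      then obtain p i where h: "p \<in> F" "Suc i < length p" "a = p ! i" "t = label (p ! i) (p ! Suc i)"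
        "b = p ! Suc i" unfolding S_edges_def by blast
      have "\<phi> a = (p ! i, i)" "\<phi> b = (p ! Suc i, Suc i)"
        unfolding \<phi>_def using tm_eq[OF h(1), of i] tm_eq[OF h(1), of "Suc i"] h by auto
      thus "(\<phi> a, t, \<phi> b) \<in> TS_edges F" unfolding TS_edges_def using h by blast
    next
      assume "(\<phi> a, t, \<phi> b) \<in> TS_edges F"
      then obtain p i where h: "p \<in> F" "Suc i < length p" "\<phi> a = (p ! i, i)" "t = label (p ! i) (p ! Suc i)"
        "\<phi> b = (p ! Suc i, Suc i)" unfolding TS_edges_def by blast
      have "a = p ! i" "b = p ! Suc i" using h(3,5) unfolding \<phi>_def by auto
      thus "(a, t, b) \<in> S_edges F" unfolding S_edges_def using h by blast
    qed
  qed
qed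

end
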